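(* Let $f_1,\dots,f_n:\mathbb{R}^d\to\mathbb{R}$ be such that each $f_i$ is $L_i$-smooth and $\mu_i$-strongly convex with minimizer $x_i$. Let $\alpha_i\in(0,1)$, $T_i(x) = \alpha_i x+(1-\alpha_i)x_i$, $\tilde f(x) = \frac{1}{n}\sum_i f_i(T_i(x))$ with minimizer $x^*$, $L_\alpha = \frac{1}{n}\sum_i\alpha_i^2L_i$, $\mu_\alpha = \frac{1}{n}\sum_i\alpha_i^2\mu_i$. Let $\omega_i\geq0$ and $\beta_i\in(0,\frac{1}{\omega_i+1}]$. Consider DIANA applied to $\tilde f$: given $x^0, h_1^0,\dots,h_n^0\in\mathbb{R}^d$, for $k\geq0$ set $\Delta_i^k = \alpha_i\nabla f_i(T_i(x^k)) - h_i^k$, $\hat\Delta_i^k = \mathcal{C}_i^k(\Delta_i^k)$, $h_i^{k+1} = h_i^k + \beta_i\hat\Delta_i^k$, $g^k = \frac{1}{n}\sum_i(h_i^k + \hat\Delta_i^k)$, $x^{k+1} = x^k - \gamma g^k$, where $\mathcal{C}_i^k\in\mathbb{B}^d(\omega_i)$ are drawn independently across $i$ and $k$. Let $\sigma_k^2 = \frac{1}{n}\sum_i\omega_i\|h_i^k - \alpha_i\nabla f_i(T_i(x^* ))\|^2$ and $\mathcal{D}^k = \|x^k - x^*\|^2 + \frac{4}{n\min_i\beta_i}\gamma^2\sigma_k^2$. If \[ 0<\gamma\leq\left(L_\alpha + \frac{2\max_i\{L_i\alpha_i^2\omega_i\}}{n} + \frac{4\max_i\{\beta_i\omega_iL_i\alpha_i^2\}}{n\min_i\beta_i}\right)^{-1},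 \] then for all $k\geq0$, $\mathbb{E}[\mathcal{D}^k]\leq\max\left\{(1-\gamma\mu_\alpha)^k, \left(1 - \tfrac12\min_i\beta_i\right)^k\right\}\mathcal{D}^0$.
   Context: A (random) operator $\mathcal{C}$ belongs to $\mathbb{B}^d(\omega)$ if $\mathbb{E}[\mathcal{C}(x)] = x$ and $\mathbb{E}\|\mathcal{C}(x)-x\|^2\leq\omega\|x\|^2$ for all $x$. A differentiable $g$ is $L$-smooth if $\|\nabla g(x)-\nabla g(y)\|\leq L\|x-y\|$, and $\mu$-strongly convex if $g(x)\geq g(y)+\langle\nabla g(y),x-y\rangle+\frac{\mu}{2}\|x-y\|^2$, for all $x,y$. *)

theory Defs
  imports "HOL-Probability.Probability"
begin

definition L_smooth :: "('a::euclidean_space \<Rightarrow> real) \<Rightarrow> ('a \<Rightarrow> 'a) \<Rightarrow> real \<Rightarrow> bool" where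
  "L_smooth f gf L \<longleftrightarrow> (\<forall>x. GDERIV f x :> gf x) \<and> (\<forall>x y. norm (gf x - gf y) \<le> L * norm (x - y))"

definition strongly_convex :: "('a::euclidean_space \<Rightarrow> real) \<Rightarrow> ('a \<Rightarrow> 'a) \<Rightarrow> real \<Rightarrow> bool" where
  "strongly_convex f gf \<mu> \<longleftrightarrow> (\<forall>x. GDERIV f x :> gf x) \<and>
     (\<forall>x y. f x \<ge> f y + inner (gf y) (x - y) + \<mu> / 2 * (norm (x - y))\<^sup>2)"

text \<open>Class B^d(omega) of unbiased random compressors. The random operator is
  b \<mapsto> C b, with b distributed according to the probability space N.\<close>

definition unbiased_compressor :: "'b measure \<Rightarrow> ('b \<Rightarrow> 'a::euclidean_space \<Rightarrow> 'a) \<Rightarrow> real \<Rightarrow> bool" where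
  "unbiased_compressor N C \<omega> \<longleftrightarrow>
     (\<forall>x. integrable N (\<lambda>b. C b x) \<and> (\<integral>b. C b x \<partial>N) = x \<and>
          (\<integral>\<^sup>+ b. ennreal ((norm (C b x - x))\<^sup>2) \<partial>N) \<le> ennreal (\<omega> * (norm x)\<^sup>2))"

text \<open>DIANA iterates (x^k, h^k) for the objective (1/n) sum_i f_i(T_i x), where
  gf i is the gradient of f_i, T_i x = alpha_i x + (1 - alpha_i) xm_i,
  and the compressor C_i^k is C k i (w (k,i)) for the sample w.\<close>

primrec diana :: "nat \<Rightarrow> (nat \<Rightarrow> 'a \<Rightarrow> 'a) \<Rightarrow> (nat \<Rightarrow> real) \<Rightarrow> (nat \<Rightarrow> 'a) \<Rightarrow> (nat \<Rightarrow> real)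
   \<Rightarrow> real \<Rightarrow> (nat \<Rightarrow> nat \<Rightarrow> 'b \<Rightarrow> 'a \<Rightarrow> 'a) \<Rightarrow> 'a::euclidean_space \<Rightarrow> (nat \<Rightarrow> 'a)
   \<Rightarrow> (nat \<times> nat \<Rightarrow> 'b) \<Rightarrow> nat \<Rightarrow> 'a \<times> (nat \<Rightarrow> 'a)" where
  "diana n gf \<alpha> xm \<beta> \<gamma> C x0 h0 w 0 = (x0, h0)"
| "diana n gf \<alpha> xm \<beta> \<gamma> C x0 h0 w (Suc k) =
     (let (x, h) = diana n gf \<alpha> xm \<beta> \<gamma> C x0 h0 w k;
          \<Delta> = (\<lambda>i. \<alpha> i *\<^sub>R gf i (\<alpha> i *\<^sub>R x + (1 - \<alpha> i) *\<^sub>R xm i) - h i);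
          \<Delta>h = (\<lambda>i. C k i (w (k, i)) (\<Delta> i));
          g = (1 / real n) *\<^sub>R (\<Sum>i<n. h i + \<Delta>h i)
      in (x - \<gamma> *\<^sub>R g, (\<lambda>i. h i + \<beta> i *\<^sub>R \<Delta>h i)))"

end

theory Submission
  imports Defs
begin

lemma line_deriv:
  fixes f :: "'a::euclidean_space \<Rightarrow> real"
  assumes "\<forall>x. GDERIV f x :> gf x"
  shows "((\<lambda>t. f (x + t *\<^sub>R d)) has_real_derivative inner (gf (x + t *\<^sub>R d)) d) (at t)"
proof -
  have l: "((\<lambda>t. x + t *\<^sub>R d) has_derivative (\<lambda>s. s *\<^sub>R d)) (at t)"
    by (auto intro!: derivative_eq_intros)
  have g: "(f has_derivative (\<lambda>h. inner h (gf (x + t *\<^sub>R d)))) (at (x + t *\<^sub>R d))"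
    using assms unfolding gderiv_def by blast
  have "((\<lambda>t. f (x + t *\<^sub>R d)) has_derivative (\<lambda>s. inner (s *\<^sub>R d) (gf (x + t *\<^sub>R d)))) (at t)"
    using has_derivative_compose[OF l g] by (simp add: o_def)
  then show ?thesis
    unfolding has_field_derivative_def
    by (rule has_derivative_eq_rhs) (auto simp: fun_eq_iff inner_commute)
qed

lemma descent:
  fixes f :: "'a::euclidean_space \<Rightarrow> real"
  assumes gd: "\<forall>x. GDERIV f x :> gf x" and lip: "\<forall>x y. norm (gf x - gf y) \<le> L * norm (x - y)"
  shows "f (x + d) \<le> f x + inner (gf x) d + L/2 * (norm d)\<^sup>2"
proof -
  define c where "c = inner (gf x) d"
  define h where "h t = f (x + t *\<^sub>R d) - t * c - L/2 * t\<^sup>2 * (norm d)\<^sup>2" for t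
  have hd: "(h has_real_derivative (inner (gf (x + t *\<^sub>R d)) d - c - L * t * (norm d)\<^sup>2)) (at t)" for t
    unfolding h_def
    by (auto intro!: derivative_eq_intros line_deriv[OF gd])
  obtain s where s: "0 < s" "s < 1" "h 1 - h 0 = (1 - 0) * (inner (gf (x + s *\<^sub>R d)) d - c - L * s * (norm d)\<^sup>2)"
    using MVT2[of 0 1 h "\<lambda>t. inner (gf (x + t *\<^sub>R d)) d - c - L * t * (norm d)\<^sup>2"] hd by auto
  have "inner (gf (x + s *\<^sub>R d)) d - c = inner (gf (x + s *\<^sub>R d) - gf x) d"
    by (simp add: c_def inner_diff_left)
  also have "\<dots> \<le> norm (gf (x + s *\<^sub>R d) - gf x) * norm d"
    by (rule norm_cauchy_schwarz)
  also have "\<dots> \<le> L * norm (s *\<^sub>R d) * norm d"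
    using lip[rule_format, of "x + s *\<^sub>R d" x] by (simp add: mult_right_mono)
  also have "\<dots> = L * s * (norm d)\<^sup>2"
    using s by (simp add: power2_eq_square)
  finally have "h 1 \<le> h 0" using s by simp
  then show ?thesis by (simp add: h_def c_def)
qed

lemma cocoercive:
  fixes \<phi> :: "'a::real_inner \<Rightarrow> real"
  assumes L: "L > 0"
    and conv: "\<And>x y. \<phi> x \<ge> \<phi> y + inner (G y) (x - y)"
    and desc: "\<And>x d. \<phi> (x + d) \<le> \<phi> x + inner (G x) d + L/2 * (norm d)\<^sup>2"
  shows "(norm (G x - G y))\<^sup>2 \<le> 2 * L * (\<phi> x - \<phi> y - inner (G y) (x - y))"
proof -
  define w where "w = G x - G y"
  define d where "d = - (1/L) *\<^sub>R w"
  have 1: "\<phi> (x + d) \<le> \<phi> x + inner (G x) d + L/2 * (norm d)\<^sup>2" by (rule desc)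
  have 2: "\<phi> (x + d) \<ge> \<phi> y + inner (G y) (x + d - y)" by (rule conv)
  have "inner (G x) d - inner (G y) (x + d - y) = inner w d - inner (G y) (x - y)"
    by (simp add: w_def inner_diff_left inner_diff_right inner_add_right)
  moreover have "inner w d = - (1/L) * (norm w)\<^sup>2"
    by (simp add: d_def power2_norm_eq_inner)
  moreover have nd: "(norm d)\<^sup>2 = (1/L)\<^sup>2 * (norm w)\<^sup>2"
    using L by (simp add: d_def power2_eq_square field_simps)
  moreover note 1[unfolded nd]
  ultimately have "\<phi> y \<le> \<phi> x - inner (G y) (x - y) - (1/L) * (norm w)\<^sup>2 + L/2 * ((1/L)\<^sup>2 * (norm w)\<^sup>2)"
    using 2 by linarith
  moreover have "L/2 * ((1/L)\<^sup>2 * (norm w)\<^sup>2) = (1/(2*L)) * (norm w)\<^sup>2"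
    using L by (simp add: power2_eq_square field_simps)
  moreover have "(1/L) * (norm w)\<^sup>2 = 2 * ((1/(2*L)) * (norm w)\<^sup>2)" by simp
  ultimately have k: "(1/(2*L)) * (norm w)\<^sup>2 \<le> \<phi> x - \<phi> y - inner (G y) (x - y)"
    by linarith
  have "(norm w)\<^sup>2 = (2*L) * ((1/(2*L)) * (norm w)\<^sup>2)" using L by simp
  also have "\<dots> \<le> (2*L) * (\<phi> x - \<phi> y - inner (G y) (x - y))"
    using k L by (intro mult_left_mono) auto
  finally show ?thesis by (simp add: w_def)
qed

lemma sq_mean_zero:
  fixes Z :: "'b \<Rightarrow> 'a::euclidean_space"
  assumes M: "prob_space M" and Zm: "Z \<in> borel_measurable M" and Zi: "integrable M Z"
    and Z0: "(\<integral>y. Z y \<partial>M) = 0"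
  shows "(\<integral>\<^sup>+ y. ennreal ((norm (c + Z y))\<^sup>2) \<partial>M) = ennreal ((norm c)\<^sup>2) + (\<integral>\<^sup>+ y. ennreal ((norm (Z y))\<^sup>2) \<partial>M)"
proof -
  interpret prob_space M by (rule M)
  have m1[measurable]: "(\<lambda>y. (norm (c + Z y))\<^sup>2) \<in> borel_measurable M" using Zm by measurable
  have m2[measurable]: "(\<lambda>y. (norm (Z y))\<^sup>2) \<in> borel_measurable M" using Zm by measurable
  show ?thesis
  proof (cases "(\<integral>\<^sup>+ y. ennreal ((norm (Z y))\<^sup>2) \<partial>M) = \<infinity>")
    case True
    have le: "ennreal ((norm (Z y))\<^sup>2) \<le> ennreal (2 * (norm (c + Z y))\<^sup>2 + 2 * (norm c)\<^sup>2)" for y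
    proof -
      have "norm (Z y) \<le> norm (c + Z y) + norm c"
        by (metis add_diff_cancel_left' norm_triangle_ineq4 add.commute)
      then have "(norm (Z y))\<^sup>2 \<le> (norm (c + Z y) + norm c)\<^sup>2"
        by (rule power_mono) auto
      also have "\<dots> = 2 * (norm (c + Z y))\<^sup>2 + 2 * (norm c)\<^sup>2 - (norm (c + Z y) - norm c)\<^sup>2"
        by (simp add: power2_eq_square algebra_simps)
      also have "\<dots> \<le> 2 * (norm (c + Z y))\<^sup>2 + 2 * (norm c)\<^sup>2" by simp
      finally have "(norm (Z y))\<^sup>2 \<le> 2 * (norm (c + Z y))\<^sup>2 + 2 * (norm c)\<^sup>2" .
      then show ?thesis
        by (rule ennreal_leI)
    qed
    have "\<infinity> = (\<integral>\<^sup>+ y. ennreal ((norm (Z y))\<^sup>2) \<partial>M)" using True by simp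
    also have "\<dots> \<le> (\<integral>\<^sup>+ y. ennreal (2 * (norm (c + Z y))\<^sup>2 + 2 * (norm c)\<^sup>2) \<partial>M)"
      by (rule nn_integral_mono) (rule le)
    also have "\<dots> = (\<integral>\<^sup>+ y. 2 * ennreal ((norm (c + Z y))\<^sup>2) + ennreal (2 * (norm c)\<^sup>2) \<partial>M)"
      by (intro nn_integral_cong) (simp add: ennreal_plus ennreal_mult)
    also have "\<dots> = 2 * (\<integral>\<^sup>+ y. ennreal ((norm (c + Z y))\<^sup>2) \<partial>M) + ennreal (2 * (norm c)\<^sup>2)"
      by (subst nn_integral_add) (auto simp: nn_integral_cmult emeasure_space_1)
    finally have inf: "\<infinity> \<le> 2 * (\<integral>\<^sup>+ y. ennreal ((norm (c + Z y))\<^sup>2) \<partial>M) + ennreal (2 * (norm c)\<^sup>2)" .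
    have "(\<integral>\<^sup>+ y. ennreal ((norm (c + Z y))\<^sup>2) \<partial>M) = \<infinity>"
    proof (rule ccontr)
      assume "(\<integral>\<^sup>+ y. ennreal ((norm (c + Z y))\<^sup>2) \<partial>M) \<noteq> \<infinity>"
      then have lt: "2 * (\<integral>\<^sup>+ y. ennreal ((norm (c + Z y))\<^sup>2) \<partial>M) + ennreal (2 * (norm c)\<^sup>2) < \<infinity>"
        by (auto simp: less_top[symmetric] ennreal_mult_eq_top_iff)
      have "2 * (\<integral>\<^sup>+ y. ennreal ((norm (c + Z y))\<^sup>2) \<partial>M) + ennreal (2 * (norm c)\<^sup>2) = \<infinity>"
        using inf unfolding infinity_ennreal_def by (rule top_unique[THEN iffD1])
      with lt show False by simp
    qed
    then show ?thesis using True by simp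
  next
    case False
    then obtain r where r: "(\<integral>\<^sup>+ y. ennreal ((norm (Z y))\<^sup>2) \<partial>M) = ennreal r"
      using False by (cases "(\<integral>\<^sup>+ y. ennreal ((norm (Z y))\<^sup>2) \<partial>M)" rule: ennreal_cases) auto
    have i2: "integrable M (\<lambda>y. (norm (Z y))\<^sup>2)"
      by (rule integrableI_nn_integral_finite[OF m2 _ r]) auto
    have i3: "integrable M (\<lambda>y. inner c (Z y))" using Zi by auto
    have eq: "(norm (c + Z y))\<^sup>2 = (norm c)\<^sup>2 + 2 * inner c (Z y) + (norm (Z y))\<^sup>2" for y
      by (simp add: power2_norm_eq_inner inner_add_left inner_add_right inner_commute)
    have i1: "integrable M (\<lambda>y. (norm c)\<^sup>2 + 2 * inner c (Z y) + (norm (Z y))\<^sup>2)"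
      using i2 i3 by auto
    have "(\<integral>\<^sup>+ y. ennreal ((norm (c + Z y))\<^sup>2) \<partial>M) = ennreal (\<integral>y. (norm c)\<^sup>2 + 2 * inner c (Z y) + (norm (Z y))\<^sup>2 \<partial>M)"
      unfolding eq by (rule nn_integral_eq_integral[OF i1]) (auto simp: eq[symmetric])
    also have "(\<integral>y. (norm c)\<^sup>2 + 2 * inner c (Z y) + (norm (Z y))\<^sup>2 \<partial>M) = (norm c)\<^sup>2 + (\<integral>y. (norm (Z y))\<^sup>2 \<partial>M)"
      using i2 i3 Zi Z0 by (simp add: Bochner_Integration.integral_add prob_space)
    also have "ennreal \<dots> = ennreal ((norm c)\<^sup>2) + ennreal (\<integral>y. (norm (Z y))\<^sup>2 \<partial>M)"
      by (simp add: ennreal_plus integral_nonneg_AE)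
    also have "ennreal (\<integral>y. (norm (Z y))\<^sup>2 \<partial>M) = (\<integral>\<^sup>+ y. ennreal ((norm (Z y))\<^sup>2) \<partial>M)"
      by (rule nn_integral_eq_integral[OF i2, symmetric]) auto
    finally show ?thesis .
  qed
qed


lemma prod_sq:
  fixes M :: "'i \<Rightarrow> 'b measure" and Z :: "'i \<Rightarrow> 'b \<Rightarrow> 'a::euclidean_space" and \<psi> :: "'i \<Rightarrow> 'b \<Rightarrow> real"
  assumes M: "\<And>i. prob_space (M i)" and I: "finite I" and IJ: "I \<subseteq> J"
    and Zm: "\<And>i. i \<in> J \<Longrightarrow> Z i \<in> borel_measurable (M i)"
    and Zi: "\<And>i. i \<in> J \<Longrightarrow> integrable (M i) (Z i)"
    and Z0: "\<And>i. i \<in> J \<Longrightarrow> (\<integral>y. Z i y \<partial>M i) = 0"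
    and pm: "\<And>i. i \<in> J \<Longrightarrow> \<psi> i \<in> borel_measurable (M i)"
    and p0: "\<And>i y. i \<in> J \<Longrightarrow> 0 \<le> \<psi> i y"
  shows "(\<integral>\<^sup>+w. ennreal ((norm (a + (\<Sum>i\<in>I. Z i (w i))))\<^sup>2 + (\<Sum>i\<in>I. \<psi> i (w i))) \<partial>PiM I M)
       = ennreal ((norm a)\<^sup>2) + (\<Sum>i\<in>I. (\<integral>\<^sup>+y. ennreal ((norm (Z i y))\<^sup>2) \<partial>M i) + (\<integral>\<^sup>+y. ennreal (\<psi> i y) \<partial>M i))"
  using I IJ
proof (induction I arbitrary: a rule: finite_induct)
  case empty
  interpret prob_space "PiM {} M" by (rule prob_space_PiM) (rule M)
  show ?case by (simp add: emeasure_space_1)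
next
  case (insert j I)
  interpret P: product_prob_space M UNIV
    using M by (simp add: product_prob_space_def product_prob_space_axioms_def
        product_sigma_finite_def prob_space_imp_sigma_finite)
  interpret PI: prob_space "PiM I M" by (rule prob_space_PiM) (rule M)
  interpret Mj: prob_space "M j" by (rule M)
  have jJ: "j \<in> J" and IJ': "I \<subseteq> J" using insert by auto
  have p0': "\<And>i y. i \<in> insert j I \<Longrightarrow> 0 \<le> \<psi> i y" using p0 insert(4) by blast
  have cm: "\<And>i K. i \<in> K \<Longrightarrow> i \<in> J \<Longrightarrow> (\<lambda>w. Z i (w i)) \<in> borel_measurable (PiM K M)"
  proof -
    fix i K assume a: "i \<in> K" "i \<in> J"
    show "(\<lambda>w. Z i (w i)) \<in> borel_measurable (PiM K M)"
      using measurable_compose[OF measurable_component_singleton[of i K M] Zm[of i]] a by simp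
  qed
  have pcm: "\<And>i K. i \<in> K \<Longrightarrow> i \<in> J \<Longrightarrow> (\<lambda>w. \<psi> i (w i)) \<in> borel_measurable (PiM K M)"
  proof -
    fix i K assume a: "i \<in> K" "i \<in> J"
    show "(\<lambda>w. \<psi> i (w i)) \<in> borel_measurable (PiM K M)"
      using measurable_compose[OF measurable_component_singleton[of i K M] pm[of i]] a by simp
  qed
  have sZ: "\<And>K. K \<subseteq> J \<Longrightarrow> (\<lambda>w. \<Sum>i\<in>K. Z i (w i)) \<in> borel_measurable (PiM K M)"
    by (rule borel_measurable_sum) (auto intro: cm)
  have sP: "\<And>K. K \<subseteq> J \<Longrightarrow> (\<lambda>w. \<Sum>i\<in>K. \<psi> i (w i)) \<in> borel_measurable (PiM K M)"
    by (rule borel_measurable_sum) (auto intro: pcm)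
  have fm: "(\<lambda>w. ennreal ((norm (a + (\<Sum>i\<in>insert j I. Z i (w i))))\<^sup>2 + (\<Sum>i\<in>insert j I. \<psi> i (w i))))
      \<in> borel_measurable (PiM (insert j I) M)"
    using sZ[OF insert(4)] sP[OF insert(4)] by measurable
  define c where "c x = a + (\<Sum>i\<in>I. Z i (x i))" for x
  define K where "K = (\<integral>\<^sup>+y. ennreal ((norm (Z j y))\<^sup>2) \<partial>M j) + (\<integral>\<^sup>+y. ennreal (\<psi> j y) \<partial>M j)"
  have upd: "(\<Sum>i\<in>I. g i ((x(j := y)) i)) = (\<Sum>i\<in>I. g i (x i))" for g :: "'i \<Rightarrow> 'b \<Rightarrow> 'z::comm_monoid_add" and x y
    using insert(2) by (intro sum.cong) auto
  have upd2: "(\<Sum>i\<in>I. g i (if i = j then y else x i)) = (\<Sum>i\<in>I. g i (x i))" for g :: "'i \<Rightarrow> 'b \<Rightarrow> 'z::comm_monoid_add" and x y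
    using insert(2) by (intro sum.cong) auto
  have inner: "(\<integral>\<^sup>+y. ennreal ((norm (a + (\<Sum>i\<in>insert j I. Z i ((x(j := y)) i))))\<^sup>2 + (\<Sum>i\<in>insert j I. \<psi> i ((x(j := y)) i))) \<partial>M j)
     = ennreal ((norm (c x))\<^sup>2 + (\<Sum>i\<in>I. \<psi> i (x i))) + K" for x
  proof -
    have "(\<integral>\<^sup>+y. ennreal ((norm (a + (\<Sum>i\<in>insert j I. Z i ((x(j := y)) i))))\<^sup>2 + (\<Sum>i\<in>insert j I. \<psi> i ((x(j := y)) i))) \<partial>M j)
      = (\<integral>\<^sup>+y. (ennreal ((norm (c x + Z j y))\<^sup>2) + ennreal (\<psi> j y)) + ennreal (\<Sum>i\<in>I. \<psi> i (x i)) \<partial>M j)"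
      using insert(1,2) p0'
      by (intro nn_integral_cong)
         (simp add: upd[of Z] upd[of \<psi>] upd2[of Z] upd2[of \<psi>] c_def ennreal_plus[symmetric] sum_nonneg add_ac del: ennreal_plus)
    also have "\<dots> = (\<integral>\<^sup>+y. ennreal ((norm (c x + Z j y))\<^sup>2) \<partial>M j) + (\<integral>\<^sup>+y. ennreal (\<psi> j y) \<partial>M j)
        + ennreal (\<Sum>i\<in>I. \<psi> i (x i))"
      using Zm[OF jJ] pm[OF jJ]
      by (simp add: nn_integral_add prob_space.emeasure_space_1[OF M])
    also have "\<dots> = ennreal ((norm (c x))\<^sup>2) + K + ennreal (\<Sum>i\<in>I. \<psi> i (x i))"
      by (simp add: sq_mean_zero[OF M Zm[OF jJ] Zi[OF jJ] Z0[OF jJ]] K_def add_ac)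
    also have "\<dots> = ennreal ((norm (c x))\<^sup>2 + (\<Sum>i\<in>I. \<psi> i (x i))) + K"
      using p0' by (simp add: ennreal_plus sum_nonneg add_ac)
    finally show ?thesis .
  qed
  have "(\<integral>\<^sup>+w. ennreal ((norm (a + (\<Sum>i\<in>insert j I. Z i (w i))))\<^sup>2 + (\<Sum>i\<in>insert j I. \<psi> i (w i))) \<partial>PiM (insert j I) M)
     = (\<integral>\<^sup>+x. ennreal ((norm (c x))\<^sup>2 + (\<Sum>i\<in>I. \<psi> i (x i))) + K \<partial>PiM I M)"
    unfolding P.product_nn_integral_insert[OF insert(1,2) fm] inner by (rule refl)
  also have "\<dots> = (\<integral>\<^sup>+x. ennreal ((norm (c x))\<^sup>2 + (\<Sum>i\<in>I. \<psi> i (x i))) \<partial>PiM I M) + K"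
    using sZ[OF IJ'] sP[OF IJ'] unfolding c_def
    by (subst nn_integral_add) (auto simp: prob_space.emeasure_space_1[OF prob_space_PiM[OF M]])
  also have "\<dots> = ennreal ((norm a)\<^sup>2) + (\<Sum>i\<in>I. (\<integral>\<^sup>+y. ennreal ((norm (Z i y))\<^sup>2) \<partial>M i) + (\<integral>\<^sup>+y. ennreal (\<psi> i y) \<partial>M i)) + K"
    unfolding c_def using insert(3)[OF IJ'] by simp
  also have "\<dots> = ennreal ((norm a)\<^sup>2) + (\<Sum>i\<in>insert j I. (\<integral>\<^sup>+y. ennreal ((norm (Z i y))\<^sup>2) \<partial>M i) + (\<integral>\<^sup>+y. ennreal (\<psi> i y) \<partial>M i))"
    using insert(1,2) by (simp add: K_def add_ac)
  finally show ?case .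
qed


lemma per_i:
  fixes \<omega> D U V W Q ll \<beta> \<beta>m A B p q :: real
  assumes "0 \<le> \<omega>" "0 \<le> D" "0 \<le> U" "V \<le> 2 * ll * D" "W \<le> 2 * V + 2 * U"
    "0 < \<beta>m" "\<beta>m \<le> \<beta>" "\<beta> \<le> 1" "\<omega> * ll \<le> A" "\<beta> * \<omega> * ll \<le> B"
    "Q \<le> (1 - \<beta>) * U + \<beta> * V" "0 \<le> p" "0 \<le> q" "p = q * \<beta>m / 4"
  shows "p * \<omega> * W + q * \<omega> * Q \<le> q * (1 - \<beta>m / 2) * \<omega> * U + (4 * p * A + 2 * q * B) * D"
proof -
  have 1: "p * \<omega> * W \<le> p * \<omega> * (2 * V + 2 * U)"
    using assms(1,5,12) by (intro mult_left_mono) auto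
  have 2: "q * \<omega> * Q \<le> q * \<omega> * ((1 - \<beta>) * U + \<beta> * V)"
    using assms by (intro mult_left_mono) auto
  have 3: "\<omega> * U * (2 * p + q * (1 - \<beta>)) \<le> \<omega> * U * (2 * p + q * (1 - \<beta>m))"
    using assms by (intro mult_left_mono) (auto intro: mult_left_mono)
  have "0 \<le> q * \<beta>" using assms by simp
  then have 4: "\<omega> * V * (2 * p + q * \<beta>) \<le> \<omega> * (2 * ll * D) * (2 * p + q * \<beta>)"
    using assms(1,4,12) by (intro mult_right_mono mult_left_mono) auto
  have 5: "\<omega> * (2 * ll * D) * (2 * p + q * \<beta>) = 4 * p * (\<omega> * ll) * D + 2 * q * (\<beta> * \<omega> * ll) * D"
    by (simp add: algebra_simps)
  have 6: "4 * p * (\<omega> * ll) * D \<le> 4 * p * A * D"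
    using assms(1-13) by (intro mult_right_mono mult_left_mono) auto
  have 7: "2 * q * (\<beta> * \<omega> * ll) * D \<le> 2 * q * B * D"
    using assms(1-13) by (intro mult_right_mono mult_left_mono) auto
  have 8: "p * \<omega> * (2 * V + 2 * U) + q * \<omega> * ((1 - \<beta>) * U + \<beta> * V)
     = \<omega> * U * (2 * p + q * (1 - \<beta>)) + \<omega> * V * (2 * p + q * \<beta>)"
    by (simp add: algebra_simps)
  have 9: "\<omega> * U * (2 * p + q * (1 - \<beta>m)) = q * (1 - \<beta>m / 2) * \<omega> * U"
    using assms(14) by (simp add: algebra_simps)
  have 10: "(4 * p * A + 2 * q * B) * D = 4 * p * A * D + 2 * q * B * D"
    by (simp add: algebra_simps)
  have "p * \<omega> * W + q * \<omega> * Q \<le> \<omega> * U * (2 * p + q * (1 - \<beta>)) + \<omega> * V * (2 * p + q * \<beta>)"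
    using 1 2 8 by linarith
  also have "\<dots> \<le> q * (1 - \<beta>m / 2) * \<omega> * U + (4 * p * A + 2 * q * B) * D"
    using 3 4 5 6 7 9 10 by linarith
  finally show ?thesis .
qed


lemma compr_Z:
  fixes Cb :: "'b \<Rightarrow> 'a::euclidean_space \<Rightarrow> 'a"
  assumes P: "prob_space M" and U: "unbiased_compressor M Cb w"
  shows "integrable M (\<lambda>b. t *\<^sub>R (Cb b d - d))"
    and "(\<lambda>b. t *\<^sub>R (Cb b d - d)) \<in> borel_measurable M"
    and "(\<integral>b. t *\<^sub>R (Cb b d - d) \<partial>M) = 0"
    and "(\<integral>\<^sup>+b. ennreal ((norm (t *\<^sub>R (Cb b d - d)))\<^sup>2) \<partial>M) \<le> ennreal (t\<^sup>2 * (w * (norm d)\<^sup>2))"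
    and "(\<lambda>b. Cb b d) \<in> borel_measurable M"
proof -
  interpret prob_space M by (rule P)
  have ci: "integrable M (\<lambda>b. Cb b d)" and ce: "(\<integral>b. Cb b d \<partial>M) = d"
    and cv: "(\<integral>\<^sup>+b. ennreal ((norm (Cb b d - d))\<^sup>2) \<partial>M) \<le> ennreal (w * (norm d)\<^sup>2)"
    using U unfolding unbiased_compressor_def by auto
  have i2: "integrable M (\<lambda>b. t *\<^sub>R (Cb b d - d))" using ci by auto
  show "integrable M (\<lambda>b. t *\<^sub>R (Cb b d - d))" by (rule i2)
  show "(\<lambda>b. t *\<^sub>R (Cb b d - d)) \<in> borel_measurable M" using i2 by (rule borel_measurable_integrable)
  show cm: "(\<lambda>b. Cb b d) \<in> borel_measurable M" using ci by (rule borel_measurable_integrable)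
  show "(\<integral>b. t *\<^sub>R (Cb b d - d) \<partial>M) = 0"
    using ci ce by (simp add: prob_space)
  have "(\<integral>\<^sup>+b. ennreal ((norm (t *\<^sub>R (Cb b d - d)))\<^sup>2) \<partial>M) = (\<integral>\<^sup>+b. ennreal (t\<^sup>2) * ennreal ((norm (Cb b d - d))\<^sup>2) \<partial>M)"
    by (intro nn_integral_cong) (simp add: power_mult_distrib ennreal_mult')
  also have "\<dots> = ennreal (t\<^sup>2) * (\<integral>\<^sup>+b. ennreal ((norm (Cb b d - d))\<^sup>2) \<partial>M)"
    using cm by (intro nn_integral_cmult measurable_compose[OF _ measurable_ennreal] borel_measurable_power
        measurable_compose[OF _ borel_measurable_norm] borel_measurable_diff borel_measurable_const)
  also have "\<dots> \<le> ennreal (t\<^sup>2) * ennreal (w * (norm d)\<^sup>2)"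
    using cv by (rule mult_left_mono) simp
  also have "\<dots> = ennreal (t\<^sup>2 * (w * (norm d)\<^sup>2))" by (simp add: ennreal_mult')
  finally show "(\<integral>\<^sup>+b. ennreal ((norm (t *\<^sub>R (Cb b d - d)))\<^sup>2) \<partial>M) \<le> ennreal (t\<^sup>2 * (w * (norm d)\<^sup>2))" .
qed

context
  fixes n :: nat and f :: "nat \<Rightarrow> 'a::euclidean_space \<Rightarrow> real" and gf :: "nat \<Rightarrow> 'a \<Rightarrow> 'a"
    and L \<mu> \<alpha> :: "nat \<Rightarrow> real" and xm :: "nat \<Rightarrow> 'a" and xstar :: 'a
  assumes n_pos: "n \<ge> 1"
    and smooth: "\<forall>i<n. L_smooth (f i) (gf i) (L i)"
    and sconv: "\<forall>i<n. 0 < \<mu> i \<and> strongly_convex (f i) (gf i) (\<mu> i)"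
    and alpha: "\<forall>i<n. 0 < \<alpha> i \<and> \<alpha> i < 1"
begin

lemma L_pos: "i < n \<Longrightarrow> 0 < L i"
proof -
  assume i: "i < n"
  obtain d :: 'a where d: "norm d = 1" using vector_choose_size[of 1] by auto
  have "f i (0 + d) \<le> f i 0 + inner (gf i 0) d + L i / 2 * (norm d)\<^sup>2"
    using smooth i unfolding L_smooth_def by (intro descent) auto
  moreover have "f i d \<ge> f i 0 + inner (gf i 0) (d - 0) + \<mu> i / 2 * (norm (d - 0))\<^sup>2"
    using sconv i unfolding strongly_convex_def by blast
  ultimately have "\<mu> i \<le> L i" using d by simp
  then show ?thesis using sconv i by force
qed

lemma phi_desc: "i < n \<Longrightarrow> f i (\<alpha> i *\<^sub>R (x + d) + (1 - \<alpha> i) *\<^sub>R xm i)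
   \<le> f i (\<alpha> i *\<^sub>R x + (1 - \<alpha> i) *\<^sub>R xm i) + inner (\<alpha> i *\<^sub>R gf i (\<alpha> i *\<^sub>R x + (1 - \<alpha> i) *\<^sub>R xm i)) d
     + (\<alpha> i)\<^sup>2 * L i / 2 * (norm d)\<^sup>2"
proof -
  assume i: "i < n"
  have "f i ((\<alpha> i *\<^sub>R x + (1 - \<alpha> i) *\<^sub>R xm i) + \<alpha> i *\<^sub>R d) \<le> f i (\<alpha> i *\<^sub>R x + (1 - \<alpha> i) *\<^sub>R xm i)
     + inner (gf i (\<alpha> i *\<^sub>R x + (1 - \<alpha> i) *\<^sub>R xm i)) (\<alpha> i *\<^sub>R d) + L i / 2 * (norm (\<alpha> i *\<^sub>R d))\<^sup>2"
    using smooth i unfolding L_smooth_def by (intro descent) auto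
  moreover have "\<alpha> i *\<^sub>R (x + d) + (1 - \<alpha> i) *\<^sub>R xm i = (\<alpha> i *\<^sub>R x + (1 - \<alpha> i) *\<^sub>R xm i) + \<alpha> i *\<^sub>R d"
    by (simp add: algebra_simps)
  moreover have "(norm (\<alpha> i *\<^sub>R d))\<^sup>2 = (\<alpha> i)\<^sup>2 * (norm d)\<^sup>2"
    by (simp add: power_mult_distrib)
  ultimately show ?thesis by (simp add: algebra_simps)
qed

lemma phi_sconv: "i < n \<Longrightarrow> f i (\<alpha> i *\<^sub>R x + (1 - \<alpha> i) *\<^sub>R xm i)
   \<ge> f i (\<alpha> i *\<^sub>R y + (1 - \<alpha> i) *\<^sub>R xm i) + inner (\<alpha> i *\<^sub>R gf i (\<alpha> i *\<^sub>R y + (1 - \<alpha> i) *\<^sub>R xm i)) (x - y)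
     + (\<alpha> i)\<^sup>2 * \<mu> i / 2 * (norm (x - y))\<^sup>2"
proof -
  assume i: "i < n"
  have "f i (\<alpha> i *\<^sub>R x + (1 - \<alpha> i) *\<^sub>R xm i) \<ge> f i (\<alpha> i *\<^sub>R y + (1 - \<alpha> i) *\<^sub>R xm i)
     + inner (gf i (\<alpha> i *\<^sub>R y + (1 - \<alpha> i) *\<^sub>R xm i)) ((\<alpha> i *\<^sub>R x + (1 - \<alpha> i) *\<^sub>R xm i) - (\<alpha> i *\<^sub>R y + (1 - \<alpha> i) *\<^sub>R xm i))
     + \<mu> i / 2 * (norm ((\<alpha> i *\<^sub>R x + (1 - \<alpha> i) *\<^sub>R xm i) - (\<alpha> i *\<^sub>R y + (1 - \<alpha> i) *\<^sub>R xm i)))\<^sup>2"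
    using sconv i unfolding strongly_convex_def by blast
  moreover have "(\<alpha> i *\<^sub>R x + (1 - \<alpha> i) *\<^sub>R xm i) - (\<alpha> i *\<^sub>R y + (1 - \<alpha> i) *\<^sub>R xm i) = \<alpha> i *\<^sub>R (x - y)"
    by (simp add: algebra_simps)
  moreover have "(norm (\<alpha> i *\<^sub>R (x - y)))\<^sup>2 = (\<alpha> i)\<^sup>2 * (norm (x - y))\<^sup>2"
    by (simp add: power_mult_distrib)
  ultimately show ?thesis by (simp add: algebra_simps)
qed

lemma phi_coco: "i < n \<Longrightarrow>
  (norm (\<alpha> i *\<^sub>R gf i (\<alpha> i *\<^sub>R x + (1 - \<alpha> i) *\<^sub>R xm i) - \<alpha> i *\<^sub>R gf i (\<alpha> i *\<^sub>R y + (1 - \<alpha> i) *\<^sub>R xm i)))\<^sup>2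
  \<le> 2 * ((\<alpha> i)\<^sup>2 * L i) * (f i (\<alpha> i *\<^sub>R x + (1 - \<alpha> i) *\<^sub>R xm i) - f i (\<alpha> i *\<^sub>R y + (1 - \<alpha> i) *\<^sub>R xm i)
      - inner (\<alpha> i *\<^sub>R gf i (\<alpha> i *\<^sub>R y + (1 - \<alpha> i) *\<^sub>R xm i)) (x - y))"
proof -
  assume i: "i < n"
  have "0 < \<alpha> i" using alpha i by blast
  then have "0 < (\<alpha> i)\<^sup>2" by simp
  then have "0 < (\<alpha> i)\<^sup>2 * L i" using L_pos[OF i] by simp
  moreover have "\<And>x y. f i (\<alpha> i *\<^sub>R x + (1 - \<alpha> i) *\<^sub>R xm i)
   \<ge> f i (\<alpha> i *\<^sub>R y + (1 - \<alpha> i) *\<^sub>R xm i) + inner (\<alpha> i *\<^sub>R gf i (\<alpha> i *\<^sub>R y + (1 - \<alpha> i) *\<^sub>R xm i)) (x - y)"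
  proof -
    fix x y :: 'a
    have "0 < \<mu> i" using sconv i by blast
    then have "0 \<le> (\<alpha> i)\<^sup>2 * \<mu> i / 2 * (norm (x - y))\<^sup>2" by simp
    then show "?thesis x y" using phi_sconv[OF i, where x=x and y=y] by linarith
  qed
  ultimately show ?thesis
    using cocoercive[where \<phi>="\<lambda>x. f i (\<alpha> i *\<^sub>R x + (1 - \<alpha> i) *\<^sub>R xm i)"
        and G="\<lambda>x. \<alpha> i *\<^sub>R gf i (\<alpha> i *\<^sub>R x + (1 - \<alpha> i) *\<^sub>R xm i)" and L="(\<alpha> i)\<^sup>2 * L i"]
      phi_desc[OF i] by (simp add: mult.assoc)
qed

definition "FF x = (1 / real n) * (\<Sum>i<n. f i (\<alpha> i *\<^sub>R x + (1 - \<alpha> i) *\<^sub>R xm i))"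
definition "GG x = (1 / real n) *\<^sub>R (\<Sum>i<n. \<alpha> i *\<^sub>R gf i (\<alpha> i *\<^sub>R x + (1 - \<alpha> i) *\<^sub>R xm i))"
definition "La = (1 / real n) * (\<Sum>i<n. (\<alpha> i)\<^sup>2 * L i)"
definition "Mu = (1 / real n) * (\<Sum>i<n. (\<alpha> i)\<^sup>2 * \<mu> i)"

lemma La_pos: "0 < La"
proof -
  have "0 \<in> {..<n}" using n_pos by simp
  then have ne: "{..<n} \<noteq> {}" by blast
  have "0 < (\<Sum>i<n. (\<alpha> i)\<^sup>2 * L i)"
  proof (rule sum_pos[OF _ ne])
    fix i assume i: "i \<in> {..<n}"
    have "0 < \<alpha> i" using alpha i by blast
    then have "0 < (\<alpha> i)\<^sup>2" by simp
    then show "0 < (\<alpha> i)\<^sup>2 * L i" using L_pos i by simp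
  qed simp
  then show ?thesis using n_pos by (simp add: La_def)
qed

lemma F_desc: "FF (x + d) \<le> FF x + inner (GG x) d + La / 2 * (norm d)\<^sup>2"
proof -
  have "(\<Sum>i<n. f i (\<alpha> i *\<^sub>R (x + d) + (1 - \<alpha> i) *\<^sub>R xm i)) \<le>
     (\<Sum>i<n. f i (\<alpha> i *\<^sub>R x + (1 - \<alpha> i) *\<^sub>R xm i) + inner (\<alpha> i *\<^sub>R gf i (\<alpha> i *\<^sub>R x + (1 - \<alpha> i) *\<^sub>R xm i)) d
     + (\<alpha> i)\<^sup>2 * L i / 2 * (norm d)\<^sup>2)"
    by (rule sum_mono) (rule phi_desc, simp)
  also have "\<dots> = (\<Sum>i<n. f i (\<alpha> i *\<^sub>R x + (1 - \<alpha> i) *\<^sub>R xm i)) + inner (\<Sum>i<n. \<alpha> i *\<^sub>R gf i (\<alpha> i *\<^sub>R x + (1 - \<alpha> i) *\<^sub>R xm i)) d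
     + (\<Sum>i<n. (\<alpha> i)\<^sup>2 * L i) / 2 * (norm d)\<^sup>2"
    by (simp add: sum.distrib inner_sum_left sum_distrib_right sum_divide_distrib)
  finally have *: "(\<Sum>i<n. f i (\<alpha> i *\<^sub>R (x + d) + (1 - \<alpha> i) *\<^sub>R xm i)) \<le> \<dots>" .
  have "FF (x + d) \<le> (1 / real n) * ((\<Sum>i<n. f i (\<alpha> i *\<^sub>R x + (1 - \<alpha> i) *\<^sub>R xm i)) + inner (\<Sum>i<n. \<alpha> i *\<^sub>R gf i (\<alpha> i *\<^sub>R x + (1 - \<alpha> i) *\<^sub>R xm i)) d
     + (\<Sum>i<n. (\<alpha> i)\<^sup>2 * L i) / 2 * (norm d)\<^sup>2)"
    unfolding FF_def by (rule mult_left_mono[OF *]) simp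
  also have "\<dots> = FF x + inner (GG x) d + La / 2 * (norm d)\<^sup>2"
    by (simp add: FF_def GG_def La_def algebra_simps)
  finally show ?thesis .
qed

lemma F_sconv: "FF x \<ge> FF y + inner (GG y) (x - y) + Mu / 2 * (norm (x - y))\<^sup>2"
proof -
  have "(\<Sum>i<n. f i (\<alpha> i *\<^sub>R y + (1 - \<alpha> i) *\<^sub>R xm i) + inner (\<alpha> i *\<^sub>R gf i (\<alpha> i *\<^sub>R y + (1 - \<alpha> i) *\<^sub>R xm i)) (x - y)
     + (\<alpha> i)\<^sup>2 * \<mu> i / 2 * (norm (x - y))\<^sup>2) \<le> (\<Sum>i<n. f i (\<alpha> i *\<^sub>R x + (1 - \<alpha> i) *\<^sub>R xm i))"
    by (rule sum_mono) (rule phi_sconv, simp)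
  moreover have "(\<Sum>i<n. f i (\<alpha> i *\<^sub>R y + (1 - \<alpha> i) *\<^sub>R xm i) + inner (\<alpha> i *\<^sub>R gf i (\<alpha> i *\<^sub>R y + (1 - \<alpha> i) *\<^sub>R xm i)) (x - y)
     + (\<alpha> i)\<^sup>2 * \<mu> i / 2 * (norm (x - y))\<^sup>2) = (\<Sum>i<n. f i (\<alpha> i *\<^sub>R y + (1 - \<alpha> i) *\<^sub>R xm i)) + inner (\<Sum>i<n. \<alpha> i *\<^sub>R gf i (\<alpha> i *\<^sub>R y + (1 - \<alpha> i) *\<^sub>R xm i)) (x - y)
     + (\<Sum>i<n. (\<alpha> i)\<^sup>2 * \<mu> i) / 2 * (norm (x - y))\<^sup>2"
    by (simp add: sum.distrib inner_sum_left sum_distrib_right sum_divide_distrib)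
  ultimately have *: "(\<Sum>i<n. f i (\<alpha> i *\<^sub>R y + (1 - \<alpha> i) *\<^sub>R xm i)) + inner (\<Sum>i<n. \<alpha> i *\<^sub>R gf i (\<alpha> i *\<^sub>R y + (1 - \<alpha> i) *\<^sub>R xm i)) (x - y)
     + (\<Sum>i<n. (\<alpha> i)\<^sup>2 * \<mu> i) / 2 * (norm (x - y))\<^sup>2 \<le> (\<Sum>i<n. f i (\<alpha> i *\<^sub>R x + (1 - \<alpha> i) *\<^sub>R xm i))" by simp
  have "FF y + inner (GG y) (x - y) + Mu / 2 * (norm (x - y))\<^sup>2 = (1 / real n) * ((\<Sum>i<n. f i (\<alpha> i *\<^sub>R y + (1 - \<alpha> i) *\<^sub>R xm i)) + inner (\<Sum>i<n. \<alpha> i *\<^sub>R gf i (\<alpha> i *\<^sub>R y + (1 - \<alpha> i) *\<^sub>R xm i)) (x - y)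
     + (\<Sum>i<n. (\<alpha> i)\<^sup>2 * \<mu> i) / 2 * (norm (x - y))\<^sup>2)"
    by (simp add: FF_def GG_def Mu_def algebra_simps)
  also have "\<dots> \<le> FF x"
    unfolding FF_def by (rule mult_left_mono[OF *]) simp
  finally show ?thesis .
qed

lemma F_coco: "(norm (GG x - GG y))\<^sup>2 \<le> 2 * La * (FF x - FF y - inner (GG y) (x - y))"
proof (rule cocoercive[OF La_pos])
  fix x y :: 'a
  have "0 \<le> (\<Sum>i<n. (\<alpha> i)\<^sup>2 * \<mu> i)"
  proof (rule sum_nonneg)
    fix i assume "i \<in> {..<n}"
    then have "0 < \<mu> i" using sconv by blast
    then show "0 \<le> (\<alpha> i)\<^sup>2 * \<mu> i" by simp
  qed
  then have "0 \<le> Mu" unfolding Mu_def by simp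
  then have "0 \<le> Mu / 2 * (norm (x - y))\<^sup>2" by simp
  then show "FF y + inner (GG y) (x - y) \<le> FF x" using F_sconv[where x=x and y=y] by linarith
next
  fix x d :: 'a show "FF (x + d) \<le> FF x + inner (GG x) d + La / 2 * (norm d)\<^sup>2" by (rule F_desc)
qed

lemma GG_star:
  assumes xmin: "\<forall>y. FF xstar \<le> FF y"
  shows "GG xstar = 0"
proof -
  define G where "G = GG xstar"
  have "FF xstar \<le> FF (xstar + (- (1 / La)) *\<^sub>R G)" using xmin by blast
  also have "\<dots> \<le> FF xstar + inner G ((- (1 / La)) *\<^sub>R G) + La / 2 * (norm ((- (1 / La)) *\<^sub>R G))\<^sup>2"
    unfolding G_def by (rule F_desc)
  also have "\<dots> = FF xstar - (1 / (2 * La)) * (norm G)\<^sup>2"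
  proof -
    have e1: "inner G ((- (1 / La)) *\<^sub>R G) = - (1/La) * (norm G)\<^sup>2" by (simp add: power2_norm_eq_inner)
    have e2: "(norm ((- (1 / La)) *\<^sub>R G))\<^sup>2 = (1/La)\<^sup>2 * (norm G)\<^sup>2"
      using La_pos by (simp add: power_divide power_mult_distrib)
    show ?thesis using La_pos by (simp only: e1 e2) (simp add: power2_eq_square field_simps)
  qed
  finally have "(1 / (2 * La)) * (norm G)\<^sup>2 \<le> 0" by simp
  then have "(norm G)\<^sup>2 \<le> 0" using La_pos by (simp add: field_simps)
  then show ?thesis unfolding G_def by simp
qed


lemma lin_comb:
  fixes s r T a1 a b c E e2 m ff M1 M2 X :: real
  assumes "s \<le> r + T" "a1 \<le> a" "b \<le> c" "c + T = E" "E \<le> e2" "a1 = e2 + m" "ff \<le> M1" "r \<le> M2" "ff = X - m"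
  shows "X - a + b + s \<le> M1 + M2"
  using assms by linarith

lemma norm_add_scale_sq: "(norm (u + c *\<^sub>R d))\<^sup>2 = (norm u)\<^sup>2 + 2 * c * inner u d + c\<^sup>2 * (norm (d::'a))\<^sup>2"
proof -
  have "(norm (u + c *\<^sub>R d))\<^sup>2 = inner (u + c *\<^sub>R d) (u + c *\<^sub>R d)" by (simp add: power2_norm_eq_inner)
  also have "\<dots> = inner u u + 2 * c * inner u d + c\<^sup>2 * inner d d"
    by (simp add: inner_add_left inner_add_right inner_commute power2_eq_square algebra_simps)
  also have "\<dots> = (norm u)\<^sup>2 + 2 * c * inner u d + c\<^sup>2 * (norm d)\<^sup>2" by (simp add: power2_norm_eq_inner)
  finally show ?thesis .
qed

lemma norm_diff_sq_le: "(norm (a - b))\<^sup>2 \<le> 2 * (norm a)\<^sup>2 + 2 * (norm (b::'a))\<^sup>2"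
proof -
  have "(norm (a - b))\<^sup>2 + (norm (a + b))\<^sup>2 = 2 * (norm a)\<^sup>2 + 2 * (norm b)\<^sup>2"
    by (simp add: power2_norm_eq_inner inner_add_left inner_add_right inner_diff_left inner_diff_right inner_commute)
  moreover have "0 \<le> (norm (a + b))\<^sup>2" by simp
  ultimately show ?thesis by linarith
qed

context
  fixes \<omega> \<beta> :: "nat \<Rightarrow> real" and \<gamma> :: real
  assumes xstar_min: "\<forall>y. (1 / real n) * (\<Sum>i<n. f i (\<alpha> i *\<^sub>R xstar + (1 - \<alpha> i) *\<^sub>R xm i))
                      \<le> (1 / real n) * (\<Sum>i<n. f i (\<alpha> i *\<^sub>R y + (1 - \<alpha> i) *\<^sub>R xm i))"
    and omega: "\<forall>i<n. 0 \<le> \<omega> i"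
    and beta: "\<forall>i<n. 0 < \<beta> i \<and> \<beta> i \<le> 1 / (\<omega> i + 1)"
    and gamma_pos: "0 < \<gamma>"
    and gamma_le: "\<gamma> \<le> inverse ((1 / real n) * (\<Sum>i<n. (\<alpha> i)\<^sup>2 * L i)
                     + 2 * Max ((\<lambda>i. L i * (\<alpha> i)\<^sup>2 * \<omega> i) ` {..<n}) / real n
                     + 4 * Max ((\<lambda>i. \<beta> i * \<omega> i * L i * (\<alpha> i)\<^sup>2) ` {..<n})
                         / (real n * Min (\<beta> ` {..<n})))"
begin

lemma GGs: "GG xstar = 0"
  using GG_star xstar_min unfolding FF_def by blast

lemma ne_n: "{..<n} \<noteq> {}"
proof -
  have "0 \<in> {..<n}" using n_pos by simp
  then show ?thesis by blast
qed

lemma bm_pos: "0 < Min (\<beta> ` {..<n})"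
  using beta ne_n by (subst Min_gr_iff) auto

lemma bm_le: "i < n \<Longrightarrow> Min (\<beta> ` {..<n}) \<le> \<beta> i"
  by (rule Min_le) auto

lemma beta_le1: "i < n \<Longrightarrow> \<beta> i \<le> 1"
proof -
  assume i: "i < n"
  have "0 \<le> \<omega> i" using omega i by blast
  then have "1 / (\<omega> i + 1) \<le> 1" by simp
  then show ?thesis using beta i by force
qed

lemma bm_le1: "Min (\<beta> ` {..<n}) \<le> 1"
proof -
  have n0: "0 < n" using n_pos by simp
  show ?thesis using bm_le[OF n0] beta_le1[OF n0] by linarith
qed

lemma step_S: "\<gamma> * (La + 2 * Max ((\<lambda>i. L i * (\<alpha> i)\<^sup>2 * \<omega> i) ` {..<n}) / real n
                     + 4 * Max ((\<lambda>i. \<beta> i * \<omega> i * L i * (\<alpha> i)\<^sup>2) ` {..<n})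
                         / (real n * Min (\<beta> ` {..<n}))) \<le> 1"
proof -
  define S where "S = La + 2 * Max ((\<lambda>i. L i * (\<alpha> i)\<^sup>2 * \<omega> i) ` {..<n}) / real n
                     + 4 * Max ((\<lambda>i. \<beta> i * \<omega> i * L i * (\<alpha> i)\<^sup>2) ` {..<n})
                         / (real n * Min (\<beta> ` {..<n}))"
  have g: "\<gamma> \<le> inverse S" using gamma_le unfolding S_def La_def .
  have "0 < S"
  proof (rule ccontr)
    assume "\<not> 0 < S"
    then have "inverse S \<le> 0" by simp
    then show False using g gamma_pos by linarith
  qed
  then have "\<gamma> * S \<le> inverse S * S" using g by (intro mult_right_mono) auto
  also have "\<dots> = 1" using \<open>0 < S\<close> by simp
  finally show ?thesis unfolding S_def .
qed

lemma det_step: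
  fixes x :: 'a and h :: "nat \<Rightarrow> 'a"
  defines "gs \<equiv> \<lambda>i. \<alpha> i *\<^sub>R gf i (\<alpha> i *\<^sub>R xstar + (1 - \<alpha> i) *\<^sub>R xm i)"
      and "gx \<equiv> \<lambda>i. \<alpha> i *\<^sub>R gf i (\<alpha> i *\<^sub>R x + (1 - \<alpha> i) *\<^sub>R xm i)"
      and "\<beta>m \<equiv> Min (\<beta> ` {..<n})"
      and "K \<equiv> 4 / (real n * Min (\<beta> ` {..<n})) * \<gamma>\<^sup>2"
  shows "(norm (x - xstar - \<gamma> *\<^sub>R ((1 / real n) *\<^sub>R (\<Sum>i<n. gx i))))\<^sup>2
     + (\<Sum>i<n. (\<gamma> / real n)\<^sup>2 * \<omega> i * (norm (gx i - h i))\<^sup>2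
          + K * (1 / real n) * \<omega> i * ((norm (h i - gs i + \<beta> i *\<^sub>R (gx i - h i)))\<^sup>2
                                     + (\<beta> i)\<^sup>2 * \<omega> i * (norm (gx i - h i))\<^sup>2))
     \<le> max (1 - \<gamma> * Mu) (1 - \<beta>m / 2) * ((norm (x - xstar))\<^sup>2 + K * ((1 / real n) * (\<Sum>i<n. \<omega> i * (norm (h i - gs i))\<^sup>2)))"
proof -
  define X where "X = (norm (x - xstar))\<^sup>2"
  define G where "G = GG x"
  define Dc where "Dc i = f i (\<alpha> i *\<^sub>R x + (1 - \<alpha> i) *\<^sub>R xm i) - f i (\<alpha> i *\<^sub>R xstar + (1 - \<alpha> i) *\<^sub>R xm i) - inner (gs i) (x - xstar)" for i
  define Dt where "Dt = FF x - FF xstar"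
  define U where "U i = (norm (h i - gs i))\<^sup>2" for i
  define Vv where "Vv i = (norm (gx i - gs i))\<^sup>2" for i
  define W where "W i = (norm (gx i - h i))\<^sup>2" for i
  define Q where "Q i = (norm (h i - gs i + \<beta> i *\<^sub>R (gx i - h i)))\<^sup>2 + (\<beta> i)\<^sup>2 * \<omega> i * W i" for i
  define A where "A = Max ((\<lambda>i. L i * (\<alpha> i)\<^sup>2 * \<omega> i) ` {..<n})"
  define B where "B = Max ((\<lambda>i. \<beta> i * \<omega> i * L i * (\<alpha> i)\<^sup>2) ` {..<n})"
  define p where "p = (\<gamma> / real n)\<^sup>2"
  define q where "q = K * (1 / real n)"
  have n0: "0 < real n" using n_pos by simp
  have bm0: "0 < \<beta>m" unfolding \<beta>m_def by (rule bm_pos)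
  have q0: "0 \<le> q" unfolding q_def K_def \<beta>m_def[symmetric] using bm0 n0 by simp
  have pq: "p = q * \<beta>m / 4" unfolding p_def q_def K_def \<beta>m_def[symmetric] using bm0 n0
    by (simp add: power2_eq_square field_simps)
  have Gx: "G = (1 / real n) *\<^sub>R (\<Sum>i<n. gx i)" unfolding G_def GG_def gx_def ..
  have per: "p * \<omega> i * W i + q * \<omega> i * Q i \<le> q * (1 - \<beta>m / 2) * \<omega> i * U i + (4 * p * A + 2 * q * B) * Dc i"
    if i: "i < n" for i
  proof (rule per_i[where ll = "(\<alpha> i)\<^sup>2 * L i" and \<beta> = "\<beta> i" and V = "Vv i"])
    show "0 \<le> \<omega> i" using omega i by blast
    show "0 \<le> Dc i"
    proof -
      have "0 < \<mu> i" using sconv i by blast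
      then have "0 \<le> (\<alpha> i)\<^sup>2 * \<mu> i / 2 * (norm (x - xstar))\<^sup>2" by simp
      then show ?thesis using phi_sconv[OF i, where x=x and y=xstar] unfolding Dc_def gs_def by linarith
    qed
    show "0 \<le> U i" unfolding U_def by simp
    show "Vv i \<le> 2 * ((\<alpha> i)\<^sup>2 * L i) * Dc i"
      unfolding Vv_def Dc_def gx_def gs_def by (rule phi_coco[OF i])
    show "W i \<le> 2 * Vv i + 2 * U i"
    proof -
      have "gx i - h i = (gx i - gs i) - (h i - gs i)" by simp
      then show ?thesis unfolding W_def Vv_def U_def using norm_diff_sq_le by metis
    qed
    show "0 < \<beta>m" by (rule bm0)
    show "\<beta>m \<le> \<beta> i" unfolding \<beta>m_def by (rule bm_le[OF i])
    show "\<beta> i \<le> 1" by (rule beta_le1[OF i])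
    show "\<omega> i * ((\<alpha> i)\<^sup>2 * L i) \<le> A"
    proof -
      have "L i * (\<alpha> i)\<^sup>2 * \<omega> i \<le> A" unfolding A_def using i by (intro Max_ge) auto
      then show ?thesis by (simp add: ac_simps)
    qed
    show "\<beta> i * \<omega> i * ((\<alpha> i)\<^sup>2 * L i) \<le> B"
    proof -
      have "\<beta> i * \<omega> i * L i * (\<alpha> i)\<^sup>2 \<le> B" unfolding B_def using i by (intro Max_ge) auto
      then show ?thesis by (simp add: ac_simps)
    qed
    show "Q i \<le> (1 - \<beta> i) * U i + \<beta> i * Vv i"
    proof -
      define u where "u = h i - gs i"
      define d where "d = gx i - h i"
      have v: "gx i - gs i = u + d" unfolding u_def d_def by simp
      have b0: "0 < \<beta> i" using beta i by blast
      have w0: "0 \<le> \<omega> i" using omega i by blast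
      have bi: "\<beta> i \<le> 1 / (\<omega> i + 1)" using beta i by blast
      have "\<beta> i * (\<omega> i + 1) \<le> 1 / (\<omega> i + 1) * (\<omega> i + 1)"
        by (rule mult_right_mono[OF bi]) (use w0 in simp)
      then have bw: "\<beta> i * (\<omega> i + 1) \<le> 1" using w0 by simp
      have "(\<beta> i)\<^sup>2 * (1 + \<omega> i) = \<beta> i * (\<beta> i * (\<omega> i + 1))"
        by (simp add: power2_eq_square algebra_simps)
      also have "\<dots> \<le> \<beta> i * 1"
        by (rule mult_left_mono[OF bw]) (use b0 in simp)
      finally have bb: "(\<beta> i)\<^sup>2 * (1 + \<omega> i) \<le> \<beta> i" by simp
      have e: "(norm (u + c *\<^sub>R d))\<^sup>2 = (norm u)\<^sup>2 + 2 * c * inner u d + c\<^sup>2 * (norm d)\<^sup>2" for c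
      proof -
        have "(norm (u + c *\<^sub>R d))\<^sup>2 = inner (u + c *\<^sub>R d) (u + c *\<^sub>R d)" by (simp add: power2_norm_eq_inner)
        also have "\<dots> = inner u u + 2 * c * inner u d + c\<^sup>2 * inner d d"
          by (simp add: inner_add_left inner_add_right inner_commute power2_eq_square algebra_simps)
        also have "\<dots> = (norm u)\<^sup>2 + 2 * c * inner u d + c\<^sup>2 * (norm d)\<^sup>2" by (simp add: power2_norm_eq_inner)
        finally show ?thesis .
      qed
      have "Q i = (norm u)\<^sup>2 + 2 * \<beta> i * inner u d + (\<beta> i)\<^sup>2 * (1 + \<omega> i) * (norm d)\<^sup>2"
        unfolding Q_def W_def u_def[symmetric] d_def[symmetric] e
        by (simp add: algebra_simps)
      also have "\<dots> \<le> (norm u)\<^sup>2 + 2 * \<beta> i * inner u d + \<beta> i * (norm d)\<^sup>2"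
        using bb by (intro add_left_mono mult_right_mono) auto
      also have "\<dots> = (1 - \<beta> i) * U i + \<beta> i * Vv i"
        unfolding U_def Vv_def v u_def[symmetric] using e[of 1]
        by (simp add: algebra_simps)
      finally show ?thesis .
    qed
    show "0 \<le> p" unfolding p_def by simp
    show "0 \<le> q" by (rule q0)
    show "p = q * \<beta>m / 4" by (rule pq)
  qed
  have sumper: "(\<Sum>i<n. p * \<omega> i * W i + q * \<omega> i * Q i)
     \<le> q * (1 - \<beta>m / 2) * (\<Sum>i<n. \<omega> i * U i) + (4 * p * A + 2 * q * B) * (\<Sum>i<n. Dc i)"
  proof -
    have "(\<Sum>i<n. p * \<omega> i * W i + q * \<omega> i * Q i) \<le> (\<Sum>i<n. q * (1 - \<beta>m / 2) * \<omega> i * U i + (4 * p * A + 2 * q * B) * Dc i)"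
      by (rule sum_mono) (rule per, simp)
    also have "\<dots> = q * (1 - \<beta>m / 2) * (\<Sum>i<n. \<omega> i * U i) + (4 * p * A + 2 * q * B) * (\<Sum>i<n. Dc i)"
      by (simp add: sum.distrib sum_distrib_left mult.assoc)
    finally show ?thesis .
  qed
  have sgs: "(\<Sum>i<n. gs i) = 0"
  proof -
    have "(1 / real n) *\<^sub>R (\<Sum>i<n. gs i) = 0" using GGs unfolding GG_def gs_def .
    then show ?thesis using n0 by simp
  qed
  have sDc: "(\<Sum>i<n. Dc i) = real n * Dt"
  proof -
    have "(\<Sum>i<n. Dc i) = (\<Sum>i<n. f i (\<alpha> i *\<^sub>R x + (1 - \<alpha> i) *\<^sub>R xm i)) - (\<Sum>i<n. f i (\<alpha> i *\<^sub>R xstar + (1 - \<alpha> i) *\<^sub>R xm i)) - inner (\<Sum>i<n. gs i) (x - xstar)"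
      unfolding Dc_def by (simp add: sum_subtractf inner_sum_left)
    moreover have "real n * Dt = (\<Sum>i<n. f i (\<alpha> i *\<^sub>R x + (1 - \<alpha> i) *\<^sub>R xm i)) - (\<Sum>i<n. f i (\<alpha> i *\<^sub>R xstar + (1 - \<alpha> i) *\<^sub>R xm i))"
      unfolding Dt_def FF_def using n0 by (simp add: right_diff_distrib)
    ultimately show ?thesis unfolding sgs by simp
  qed
  have sconvG: "inner G (x - xstar) \<ge> Dt + Mu / 2 * X"
  proof -
    have "FF xstar \<ge> FF x + inner G (xstar - x) + Mu / 2 * (norm (xstar - x))\<^sup>2"
      unfolding G_def by (rule F_sconv)
    moreover have "inner G (xstar - x) = - inner G (x - xstar)"
      by (simp add: inner_diff_right)
    moreover have "Mu / 2 * (norm (xstar - x))\<^sup>2 = Mu / 2 * (norm (x - xstar))\<^sup>2" by (simp add: norm_minus_commute)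
    ultimately show ?thesis unfolding Dt_def X_def by linarith
  qed
  have cocoG: "(norm G)\<^sup>2 \<le> 2 * La * Dt"
    using F_coco[of x xstar] unfolding G_def Dt_def GGs by simp
  have Mu0: "0 \<le> Mu"
  proof -
    have "0 \<le> (\<Sum>i<n. (\<alpha> i)\<^sup>2 * \<mu> i)"
    proof (rule sum_nonneg)
      fix i assume "i \<in> {..<n}"
      then have "0 < \<mu> i" using sconv by blast
      then show "0 \<le> (\<alpha> i)\<^sup>2 * \<mu> i" by simp
    qed
    then show ?thesis unfolding Mu_def by simp
  qed
  have Dt0: "0 \<le> Dt"
  proof -
    have "0 \<le> (\<Sum>i<n. Dc i)"
    proof (rule sum_nonneg)
      fix i assume i: "i \<in> {..<n}"
      have "0 < \<mu> i" using sconv i by blast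
      then have "0 \<le> (\<alpha> i)\<^sup>2 * \<mu> i / 2 * (norm (x - xstar))\<^sup>2" by simp
      then show "0 \<le> Dc i" using phi_sconv[where i=i and x=x and y=xstar] i unfolding Dc_def gs_def by auto
    qed
    then show ?thesis using sDc n0 by (simp add: zero_le_mult_iff)
  qed
  have a_eq: "(norm (x - xstar - \<gamma> *\<^sub>R G))\<^sup>2 = X - 2 * \<gamma> * inner G (x - xstar) + \<gamma>\<^sup>2 * (norm G)\<^sup>2"
  proof -
    have eq: "x - xstar - \<gamma> *\<^sub>R G = (x - xstar) + (- \<gamma>) *\<^sub>R G" by simp
    show ?thesis unfolding X_def eq norm_add_scale_sq by (simp add: inner_commute)
  qed
  have t1: "2 * \<gamma> * inner G (x - xstar) \<ge> 2 * \<gamma> * (Dt + Mu / 2 * X)"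
    using sconvG gamma_pos by (intro mult_left_mono) auto
  have t2: "\<gamma>\<^sup>2 * (norm G)\<^sup>2 \<le> \<gamma>\<^sup>2 * (2 * La * Dt)"
    using cocoG by (intro mult_left_mono) auto
  define S where "S = La + 2 * A / real n + 4 * B / (real n * \<beta>m)"
  have gS: "\<gamma> * S \<le> 1" unfolding S_def A_def B_def \<beta>m_def by (rule step_S)
  have coef: "\<gamma>\<^sup>2 * (2 * La * Dt) + (4 * p * A + 2 * q * B) * (real n * Dt) = 2 * \<gamma> * Dt * (\<gamma> * S)"
    unfolding S_def p_def q_def K_def \<beta>m_def[symmetric] using n0 bm0
    by (simp add: power2_eq_square field_simps)
  have t3: "2 * \<gamma> * Dt * (\<gamma> * S) \<le> 2 * \<gamma> * Dt"
    using gS Dt0 gamma_pos by (simp add: mult_left_le)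
  have lhs_eq: "(\<Sum>i<n. (\<gamma> / real n)\<^sup>2 * \<omega> i * (norm (gx i - h i))\<^sup>2
          + K * (1 / real n) * \<omega> i * ((norm (h i - gs i + \<beta> i *\<^sub>R (gx i - h i)))\<^sup>2
                                     + (\<beta> i)\<^sup>2 * \<omega> i * (norm (gx i - h i))\<^sup>2))
      = (\<Sum>i<n. p * \<omega> i * W i + q * \<omega> i * Q i)"
    unfolding p_def q_def W_def Q_def ..
  have SU0: "0 \<le> (\<Sum>i<n. \<omega> i * U i)"
    using omega unfolding U_def by (intro sum_nonneg) auto
  have rhs_eq: "K * ((1 / real n) * (\<Sum>i<n. \<omega> i * (norm (h i - gs i))\<^sup>2)) = q * (\<Sum>i<n. \<omega> i * U i)"
    unfolding q_def U_def by simp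
  have X0: "0 \<le> X" unfolding X_def by simp
  have f1: "(1 - \<gamma> * Mu) * X \<le> max (1 - \<gamma> * Mu) (1 - \<beta>m / 2) * X"
    using X0 by (intro mult_right_mono) auto
  have f2: "(1 - \<beta>m / 2) * (q * (\<Sum>i<n. \<omega> i * U i)) \<le> max (1 - \<gamma> * Mu) (1 - \<beta>m / 2) * (q * (\<Sum>i<n. \<omega> i * U i))"
    using SU0 q0 by (intro mult_right_mono) auto
  have f3: "2 * \<gamma> * (Dt + Mu / 2 * X) = 2 * \<gamma> * Dt + \<gamma> * Mu * X" by (simp add: algebra_simps)
  have f4: "q * (1 - \<beta>m / 2) * (\<Sum>i<n. \<omega> i * U i) = (1 - \<beta>m / 2) * (q * (\<Sum>i<n. \<omega> i * U i))" by simp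
  have f5: "(1 - \<gamma> * Mu) * X = X - \<gamma> * Mu * X" by (simp add: algebra_simps)
  have f6: "max (1 - \<gamma> * Mu) (1 - \<beta>m / 2) * (X + q * (\<Sum>i<n. \<omega> i * U i))
     = max (1 - \<gamma> * Mu) (1 - \<beta>m / 2) * X + max (1 - \<gamma> * Mu) (1 - \<beta>m / 2) * (q * (\<Sum>i<n. \<omega> i * U i))"
    by (simp add: algebra_simps)
  have f7: "(4 * p * A + 2 * q * B) * (\<Sum>i<n. Dc i) = (4 * p * A + 2 * q * B) * (real n * Dt)"
    by (simp only: sDc)
  have sumper': "(\<Sum>i<n. p * \<omega> i * W i + q * \<omega> i * Q i)
     \<le> (1 - \<beta>m / 2) * (q * (\<Sum>i<n. \<omega> i * U i)) + (4 * p * A + 2 * q * B) * (real n * Dt)"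
    using sumper unfolding f7 f4 .
  show ?thesis
    unfolding Gx[symmetric] lhs_eq rhs_eq a_eq X_def[symmetric] f6
    by (rule lin_comb[OF sumper' t1 t2 coef t3 f3 f1 f2 f5])
qed


context
  fixes N :: "nat \<times> nat \<Rightarrow> 'b measure" and C :: "nat \<Rightarrow> nat \<Rightarrow> 'b \<Rightarrow> 'a \<Rightarrow> 'a"
    and x0 :: 'a and h0 :: "nat \<Rightarrow> 'a"
  assumes N_prob: "\<forall>k i. prob_space (N (k, i))"
    and C_meas: "\<forall>k i. (\<lambda>(b, x). C k i b x) \<in> borel_measurable (N (k, i) \<Otimes>\<^sub>M borel)"
    and C_class: "\<forall>k. \<forall>i<n. unbiased_compressor (N (k, i)) (C k i) (\<omega> i)"
begin

definition "gs i = \<alpha> i *\<^sub>R gf i (\<alpha> i *\<^sub>R xstar + (1 - \<alpha> i) *\<^sub>R xm i)"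
definition "Kc = 4 / (real n * Min (\<beta> ` {..<n})) * \<gamma>\<^sup>2"
definition "Vf s = (norm (fst s - xstar))\<^sup>2 + Kc * ((1 / real n) * (\<Sum>i<n. \<omega> i * (norm (snd s i - gs i))\<^sup>2))"
definition "Dl s i = \<alpha> i *\<^sub>R gf i (\<alpha> i *\<^sub>R fst s + (1 - \<alpha> i) *\<^sub>R xm i) - snd s i"
definition "stepf k s b = (fst s - \<gamma> *\<^sub>R ((1 / real n) *\<^sub>R (\<Sum>i<n. snd s i + C k i (b i) (Dl s i))),
    (\<lambda>i. snd s i + \<beta> i *\<^sub>R C k i (b i) (Dl s i)))"
definition "rho = max (1 - \<gamma> * Mu) (1 - Min (\<beta> ` {..<n}) / 2)"

lemma N_prob': "prob_space (N p)"
  using N_prob by (cases p) auto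

lemma diana_Suc': "diana n gf \<alpha> xm \<beta> \<gamma> C x0 h0 w (Suc k) = stepf k (diana n gf \<alpha> xm \<beta> \<gamma> C x0 h0 w k) (\<lambda>i. w (k, i))"
  by (simp add: stepf_def Dl_def Let_def split: prod.split)

lemma stepf_cong:
  assumes "fst s = fst s'" "\<forall>i<n. snd s i = snd s' i" "\<forall>i<n. b i = b' i"
  shows "fst (stepf k s b) = fst (stepf k s' b') \<and> (\<forall>i<n. snd (stepf k s b) i = snd (stepf k s' b') i)"
proof -
  have D: "Dl s i = Dl s' i" if "i < n" for i using assms that by (simp add: Dl_def)
  have "(\<Sum>i<n. snd s i + C k i (b i) (Dl s i)) = (\<Sum>i<n. snd s' i + C k i (b' i) (Dl s' i))"
    using assms D by (intro sum.cong) auto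
  then show ?thesis using assms D by (simp add: stepf_def)
qed

lemma Vf_cong: "fst s = fst s' \<Longrightarrow> \<forall>i<n. snd s i = snd s' i \<Longrightarrow> Vf s = Vf s'"
  unfolding Vf_def by (auto intro!: sum.cong)

lemma loc: "\<forall>p\<in>{..<k} \<times> {..<n}. w p = w' p \<Longrightarrow>
   fst (diana n gf \<alpha> xm \<beta> \<gamma> C x0 h0 w k) = fst (diana n gf \<alpha> xm \<beta> \<gamma> C x0 h0 w' k)
   \<and> (\<forall>i<n. snd (diana n gf \<alpha> xm \<beta> \<gamma> C x0 h0 w k) i = snd (diana n gf \<alpha> xm \<beta> \<gamma> C x0 h0 w' k) i)"
proof (induction k)
  case 0 then show ?case by simp
next
  case (Suc k)
  have "\<forall>p\<in>{..<k} \<times> {..<n}. w p = w' p" using Suc.prems by auto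
  then have ih: "fst (diana n gf \<alpha> xm \<beta> \<gamma> C x0 h0 w k) = fst (diana n gf \<alpha> xm \<beta> \<gamma> C x0 h0 w' k)
   \<and> (\<forall>i<n. snd (diana n gf \<alpha> xm \<beta> \<gamma> C x0 h0 w k) i = snd (diana n gf \<alpha> xm \<beta> \<gamma> C x0 h0 w' k) i)"
    by (rule Suc.IH)
  have "\<forall>i<n. w (k, i) = w' (k, i)" using Suc.prems by auto
  then show ?case unfolding diana_Suc' using ih by (intro stepf_cong) auto
qed

lemma gf_meas: "i < n \<Longrightarrow> gf i \<in> borel_measurable borel"
proof -
  assume i: "i < n"
  have "(L i)-lipschitz_on UNIV (gf i)"
    using smooth i L_pos[OF i] unfolding L_smooth_def
    by (intro lipschitz_onI) (auto simp: dist_norm)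
  then have "continuous_on UNIV (gf i)" by (rule lipschitz_on_continuous_on)
  then show ?thesis by (rule borel_measurable_continuous_onI)
qed

lemma meas:
  assumes "{..<k} \<times> {..<n} \<subseteq> J"
  shows "(\<lambda>w. fst (diana n gf \<alpha> xm \<beta> \<gamma> C x0 h0 w k)) \<in> borel_measurable (PiM J N)
    \<and> (\<forall>i<n. (\<lambda>w. snd (diana n gf \<alpha> xm \<beta> \<gamma> C x0 h0 w k) i) \<in> borel_measurable (PiM J N))"
  using assms
proof (induction k)
  case 0 then show ?case by simp
next
  case (Suc k)
  have "{..<k} \<times> {..<n} \<subseteq> J" using Suc.prems by auto
  then have ih: "(\<lambda>w. fst (diana n gf \<alpha> xm \<beta> \<gamma> C x0 h0 w k)) \<in> borel_measurable (PiM J N)"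
      "\<And>i. i < n \<Longrightarrow> (\<lambda>w. snd (diana n gf \<alpha> xm \<beta> \<gamma> C x0 h0 w k) i) \<in> borel_measurable (PiM J N)"
    using Suc.IH by auto
  have Dm: "(\<lambda>w. Dl (diana n gf \<alpha> xm \<beta> \<gamma> C x0 h0 w k) i) \<in> borel_measurable (PiM J N)" if i: "i < n" for i
    unfolding Dl_def
    by (intro borel_measurable_diff borel_measurable_scaleR borel_measurable_const ih(2)[OF i]
        measurable_compose[OF _ gf_meas[OF i]] borel_measurable_add ih(1))
  have Cm: "(\<lambda>w. C k i (w (k, i)) (Dl (diana n gf \<alpha> xm \<beta> \<gamma> C x0 h0 w k) i)) \<in> borel_measurable (PiM J N)"
    if i: "i < n" for i
  proof -
    have kiJ: "(k, i) \<in> J" using Suc.prems i by auto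
    have "(\<lambda>w. (w (k, i), Dl (diana n gf \<alpha> xm \<beta> \<gamma> C x0 h0 w k) i)) \<in> measurable (PiM J N) (N (k, i) \<Otimes>\<^sub>M borel)"
      by (intro measurable_Pair measurable_component_singleton kiJ Dm i)
    from measurable_compose[OF this C_meas[rule_format]] show ?thesis by simp
  qed
  show ?case unfolding diana_Suc' stepf_def fst_conv snd_conv
    by (intro conjI allI impI borel_measurable_diff borel_measurable_scaleR borel_measurable_const
        borel_measurable_sum borel_measurable_add ih Cm) auto
qed

lemma Vm: "{..<k} \<times> {..<n} \<subseteq> J \<Longrightarrow> (\<lambda>w. Vf (diana n gf \<alpha> xm \<beta> \<gamma> C x0 h0 w k)) \<in> borel_measurable (PiM J N)"
  using meas[of k J] unfolding Vf_def
  by (intro borel_measurable_add borel_measurable_times borel_measurable_const borel_measurable_power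
      measurable_compose[OF _ borel_measurable_norm] borel_measurable_diff borel_measurable_sum) auto


lemma Kc0: "0 \<le> Kc" unfolding Kc_def using bm_pos by simp

lemma rho0: "0 \<le> rho"
  unfolding rho_def using bm_le1 by simp

lemma Vf0: "0 \<le> Vf s"
  unfolding Vf_def using Kc0 omega n_pos
  by (intro add_nonneg_nonneg mult_nonneg_nonneg sum_nonneg) auto

lemma row: "(\<integral>\<^sup>+y. ennreal (Vf (stepf k s (\<lambda>i. y (k, i)))) \<partial>PiM ({k} \<times> {..<n}) N) \<le> ennreal (rho * Vf s)"
proof -
  obtain x h where s: "s = (x, h)" by (cases s)
  define gx where "gx i = \<alpha> i *\<^sub>R gf i (\<alpha> i *\<^sub>R x + (1 - \<alpha> i) *\<^sub>R xm i)" for i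
  define \<Delta> where "\<Delta> i = gx i - h i" for i
  have Dl_eq: "Dl s i = \<Delta> i" for i by (simp add: Dl_def \<Delta>_def gx_def s)
  define R where "R = {k} \<times> {..<n}"
  have R_img: "R = Pair k ` {..<n}" unfolding R_def by auto
  have injR: "inj_on (Pair k) {..<n}" by (auto intro: inj_onI)
  have sumR: "(\<Sum>p\<in>R. g p) = (\<Sum>i<n. g (k, i))" for g :: "nat \<times> nat \<Rightarrow> 'z::comm_monoid_add"
    unfolding R_img by (simp add: sum.reindex[OF injR])
  have finR: "finite R" unfolding R_def by simp
  define Z where "Z (p::nat \<times> nat) b = (- (\<gamma> / real n)) *\<^sub>R (C k (snd p) b (\<Delta> (snd p)) - \<Delta> (snd p))" for p b
  define Zb where "Zb i b = \<beta> i *\<^sub>R (C k i b (\<Delta> i) - \<Delta> i)" for i b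
  define cc where "cc i = h i - gs i + \<beta> i *\<^sub>R \<Delta> i" for i
  define \<psi> where "\<psi> (p::nat \<times> nat) b = Kc * (1 / real n) * \<omega> (snd p) * (norm (cc (snd p) + Zb (snd p) b))\<^sup>2" for p b
  define a where "a = x - xstar - \<gamma> *\<^sub>R ((1 / real n) *\<^sub>R (\<Sum>i<n. gx i))"
  define T where "T i = (\<gamma> / real n)\<^sup>2 * \<omega> i * (norm (gx i - h i))\<^sup>2 + Kc * (1 / real n) * \<omega> i *
     ((norm (h i - gs i + \<beta> i *\<^sub>R (gx i - h i)))\<^sup>2 + (\<beta> i)\<^sup>2 * \<omega> i * (norm (gx i - h i))\<^sup>2)" for i
  have uc: "unbiased_compressor (N (k, i)) (C k i) (\<omega> i)" if "i < n" for i using C_class that by blast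
  have om: "0 \<le> \<omega> i" if "i < n" for i using omega that by blast
  have inR: "p \<in> R \<Longrightarrow> p = (k, snd p) \<and> snd p < n" for p unfolding R_def by auto
  have Zfacts: "Z p \<in> borel_measurable (N p) \<and> integrable (N p) (Z p) \<and> (\<integral>y. Z p y \<partial>N p) = 0
      \<and> (\<integral>\<^sup>+y. ennreal ((norm (Z p y))\<^sup>2) \<partial>N p) \<le> ennreal ((- (\<gamma> / real n))\<^sup>2 * (\<omega> (snd p) * (norm (\<Delta> (snd p)))\<^sup>2))"
    if p: "p \<in> R" for p
  proof -
    obtain i where pi: "p = (k, i)" "i < n" using inR[OF p] by blast
    show ?thesis unfolding pi Z_def snd_conv
      using compr_Z(1-4)[OF N_prob' uc[OF pi(2)], of "- (\<gamma> / real n)" "\<Delta> i"] by auto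
  qed
  have Zbfacts: "Zb i \<in> borel_measurable (N (k, i)) \<and> integrable (N (k, i)) (Zb i) \<and> (\<integral>y. Zb i y \<partial>N (k, i)) = 0
      \<and> (\<integral>\<^sup>+y. ennreal ((norm (Zb i y))\<^sup>2) \<partial>N (k, i)) \<le> ennreal ((\<beta> i)\<^sup>2 * (\<omega> i * (norm (\<Delta> i))\<^sup>2))"
    if i: "i < n" for i
    unfolding Zb_def using compr_Z(1-4)[OF N_prob' uc[OF i], of "\<beta> i" "\<Delta> i"] by auto
  have pm: "\<psi> p \<in> borel_measurable (N p)" if p: "p \<in> R" for p
  proof -
    obtain i where pi: "p = (k, i)" "i < n" using inR[OF p] by blast
    have "Zb i \<in> borel_measurable (N (k, i))" using Zbfacts[OF pi(2)] by blast
    then show ?thesis unfolding pi \<psi>_def snd_conv by measurable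
  qed
  have p0: "0 \<le> \<psi> p y" if p: "p \<in> R" for p y
    using inR[OF p] om Kc0 unfolding \<psi>_def by (intro mult_nonneg_nonneg) auto
  have Epsi: "(\<integral>\<^sup>+y. ennreal (\<psi> p y) \<partial>N p) \<le> ennreal (Kc * (1 / real n) * \<omega> (snd p) * ((norm (cc (snd p)))\<^sup>2
      + (\<beta> (snd p))\<^sup>2 * (\<omega> (snd p) * (norm (\<Delta> (snd p)))\<^sup>2)))" if p: "p \<in> R" for p
  proof -
    obtain i where pi: "p = (k, i)" "i < n" using inR[OF p] by blast
    define w where "w = Kc * (1 / real n) * \<omega> i"
    have w0: "0 \<le> w" unfolding w_def using Kc0 om[OF pi(2)] by simp
    note zb = Zbfacts[OF pi(2)]
    have zbm: "Zb i \<in> borel_measurable (N (k, i))" using zb by blast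
    have cmul: "(\<integral>\<^sup>+y. ennreal w * ennreal ((norm (cc i + Zb i y))\<^sup>2) \<partial>N (k, i)) = ennreal w * (\<integral>\<^sup>+y. ennreal ((norm (cc i + Zb i y))\<^sup>2) \<partial>N (k, i))"
      using zbm by (intro nn_integral_cmult measurable_compose[OF _ measurable_ennreal] borel_measurable_power
        measurable_compose[OF _ borel_measurable_norm] borel_measurable_add borel_measurable_const)
    have "(\<integral>\<^sup>+y. ennreal (\<psi> p y) \<partial>N p) = (\<integral>\<^sup>+y. ennreal w * ennreal ((norm (cc i + Zb i y))\<^sup>2) \<partial>N (k, i))"
      unfolding pi \<psi>_def snd_conv w_def[symmetric] using w0 by (intro nn_integral_cong) (simp add: ennreal_mult')
    also have "\<dots> = ennreal w * (\<integral>\<^sup>+y. ennreal ((norm (cc i + Zb i y))\<^sup>2) \<partial>N (k, i))"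
      by (rule cmul)
    also have "\<dots> = ennreal w * (ennreal ((norm (cc i))\<^sup>2) + (\<integral>\<^sup>+y. ennreal ((norm (Zb i y))\<^sup>2) \<partial>N (k, i)))"
      using zb by (subst sq_mean_zero[OF N_prob']) auto
    also have "\<dots> \<le> ennreal w * (ennreal ((norm (cc i))\<^sup>2) + ennreal ((\<beta> i)\<^sup>2 * (\<omega> i * (norm (\<Delta> i))\<^sup>2)))"
      using zb by (intro mult_left_mono add_left_mono) auto
    also have "\<dots> = ennreal w * ennreal ((norm (cc i))\<^sup>2 + (\<beta> i)\<^sup>2 * (\<omega> i * (norm (\<Delta> i))\<^sup>2))"
    proof -
      have "0 \<le> (\<beta> i)\<^sup>2 * (\<omega> i * (norm (\<Delta> i))\<^sup>2)" using om[OF pi(2)] by simp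
      then show ?thesis by (simp only: ennreal_plus[symmetric] zero_le_power2)
    qed
    also have "\<dots> = ennreal (w * ((norm (cc i))\<^sup>2 + (\<beta> i)\<^sup>2 * (\<omega> i * (norm (\<Delta> i))\<^sup>2)))"
      using w0 by (rule ennreal_mult'[symmetric])
    finally show ?thesis unfolding pi w_def snd_conv .
  qed
  have perp: "(\<integral>\<^sup>+y. ennreal ((norm (Z p y))\<^sup>2) \<partial>N p) + (\<integral>\<^sup>+y. ennreal (\<psi> p y) \<partial>N p) \<le> ennreal (T (snd p))"
    if p: "p \<in> R" for p
  proof -
    obtain i where pi: "p = (k, i)" "i < n" using inR[OF p] by blast
    have "(\<integral>\<^sup>+y. ennreal ((norm (Z p y))\<^sup>2) \<partial>N p) + (\<integral>\<^sup>+y. ennreal (\<psi> p y) \<partial>N p)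
       \<le> ennreal ((- (\<gamma> / real n))\<^sup>2 * (\<omega> i * (norm (\<Delta> i))\<^sup>2))
         + ennreal (Kc * (1 / real n) * \<omega> i * ((norm (cc i))\<^sup>2 + (\<beta> i)\<^sup>2 * (\<omega> i * (norm (\<Delta> i))\<^sup>2)))"
      using Zfacts[OF p] Epsi[OF p] unfolding pi snd_conv by (intro add_mono) auto
    also have "\<dots> = ennreal (T i)"
      using om[OF pi(2)] Kc0
      by (simp add: ennreal_plus[symmetric] T_def cc_def \<Delta>_def mult.assoc del: ennreal_plus)
    finally show ?thesis unfolding pi snd_conv .
  qed
  have T0: "0 \<le> T i" if "i < n" for i
    unfolding T_def using om[OF that] Kc0 by (intro add_nonneg_nonneg mult_nonneg_nonneg) auto
  have eq: "Vf (stepf k s (\<lambda>i. y (k, i))) = (norm (a + (\<Sum>p\<in>R. Z p (y p))))\<^sup>2 + (\<Sum>p\<in>R. \<psi> p (y p))" for y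
  proof -
    define Ch where "Ch i = C k i (y (k, i)) (\<Delta> i)" for i
    have st: "stepf k s (\<lambda>i. y (k, i)) = (x - \<gamma> *\<^sub>R ((1 / real n) *\<^sub>R (\<Sum>i<n. h i + Ch i)), (\<lambda>i. h i + \<beta> i *\<^sub>R Ch i))"
      unfolding stepf_def Dl_eq Ch_def by (simp add: s)
    have e1: "(\<Sum>i<n. h i + Ch i) = (\<Sum>i<n. gx i) + (\<Sum>i<n. Ch i - \<Delta> i)"
      unfolding sum.distrib[symmetric] by (rule sum.cong) (auto simp: \<Delta>_def)
    have e2: "(\<Sum>p\<in>R. Z p (y p)) = (- (\<gamma> / real n)) *\<^sub>R (\<Sum>i<n. Ch i - \<Delta> i)"
      unfolding sumR Z_def Ch_def snd_conv by (simp add: scaleR_sum_right)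
    have fsteq: "x - \<gamma> *\<^sub>R ((1 / real n) *\<^sub>R (\<Sum>i<n. h i + Ch i)) - xstar = a + (\<Sum>p\<in>R. Z p (y p))"
      unfolding e1 e2 a_def by (simp add: scaleR_add_right algebra_simps)
    have e3: "(\<Sum>p\<in>R. \<psi> p (y p)) = Kc * ((1 / real n) * (\<Sum>i<n. \<omega> i * (norm (h i + \<beta> i *\<^sub>R Ch i - gs i))\<^sup>2))"
    proof -
      have "cc i + Zb i (y (k, i)) = h i + \<beta> i *\<^sub>R Ch i - gs i" for i
        unfolding cc_def Zb_def Ch_def by (simp add: algebra_simps)
      then show ?thesis unfolding sumR \<psi>_def snd_conv by (simp add: sum_distrib_left mult.assoc)
    qed
    show ?thesis unfolding Vf_def st fst_conv snd_conv fsteq e3 ..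
  qed
  have "(\<integral>\<^sup>+y. ennreal (Vf (stepf k s (\<lambda>i. y (k, i)))) \<partial>PiM R N)
      = (\<integral>\<^sup>+y. ennreal ((norm (a + (\<Sum>p\<in>R. Z p (y p))))\<^sup>2 + (\<Sum>p\<in>R. \<psi> p (y p))) \<partial>PiM R N)"
    unfolding eq ..
  also have "\<dots> = ennreal ((norm a)\<^sup>2) + (\<Sum>p\<in>R. (\<integral>\<^sup>+y. ennreal ((norm (Z p y))\<^sup>2) \<partial>N p) + (\<integral>\<^sup>+y. ennreal (\<psi> p y) \<partial>N p))"
    by (rule prod_sq[OF N_prob' finR order_refl]) (use Zfacts pm p0 in auto)
  also have "\<dots> \<le> ennreal ((norm a)\<^sup>2) + (\<Sum>p\<in>R. ennreal (T (snd p)))"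
    by (intro add_left_mono sum_mono perp)
  also have "(\<Sum>p\<in>R. ennreal (T (snd p))) = ennreal (\<Sum>i<n. T i)"
    unfolding sumR snd_conv by (rule sum_ennreal) (auto intro: T0)
  also have "ennreal ((norm a)\<^sup>2) + ennreal (\<Sum>i<n. T i) = ennreal ((norm a)\<^sup>2 + (\<Sum>i<n. T i))"
  proof -
    have "0 \<le> (\<Sum>i<n. T i)" by (rule sum_nonneg) (auto intro: T0)
    then show ?thesis by (rule ennreal_plus[symmetric, OF zero_le_power2])
  qed
  also have "\<dots> \<le> ennreal (rho * Vf s)"
  proof (rule ennreal_leI)
    show "(norm a)\<^sup>2 + (\<Sum>i<n. T i) \<le> rho * Vf s"
      using det_step[of x h] unfolding a_def T_def gx_def rho_def Vf_def Kc_def gs_def s fst_conv snd_conv .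
  qed
  finally show ?thesis unfolding R_def .
qed


lemma PP: "product_prob_space N"
  using N_prob' by (simp add: product_prob_space_def product_prob_space_axioms_def
        product_sigma_finite_def prob_space_imp_sigma_finite)

lemma E_restrict:
  assumes J: "finite J" "{..<k} \<times> {..<n} \<subseteq> J"
  shows "(\<integral>\<^sup>+w. ennreal (Vf (diana n gf \<alpha> xm \<beta> \<gamma> C x0 h0 w k)) \<partial>PiM UNIV N)
       = (\<integral>\<^sup>+y. ennreal (Vf (diana n gf \<alpha> xm \<beta> \<gamma> C x0 h0 y k)) \<partial>PiM J N)"
proof -
  interpret P: product_prob_space N UNIV by (rule PP)
  have dr: "distr (PiM UNIV N) (PiM J N) (\<lambda>x. restrict x J) = PiM J N"
    using P.distr_PiM_restrict_finite[of J] J by simp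
  have gm: "(\<lambda>y. ennreal (Vf (diana n gf \<alpha> xm \<beta> \<gamma> C x0 h0 y k))) \<in> borel_measurable (PiM J N)"
    by (rule measurable_compose[OF Vm[OF J(2)] measurable_ennreal])
  have "(\<integral>\<^sup>+y. ennreal (Vf (diana n gf \<alpha> xm \<beta> \<gamma> C x0 h0 y k)) \<partial>PiM J N)
     = (\<integral>\<^sup>+y. ennreal (Vf (diana n gf \<alpha> xm \<beta> \<gamma> C x0 h0 y k)) \<partial>distr (PiM UNIV N) (PiM J N) (\<lambda>x. restrict x J))"
    by (simp only: dr)
  also have "\<dots> = (\<integral>\<^sup>+w. ennreal (Vf (diana n gf \<alpha> xm \<beta> \<gamma> C x0 h0 (restrict w J) k)) \<partial>PiM UNIV N)"
    by (rule nn_integral_distr[OF measurable_restrict_subset]) (use gm dr in auto)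
  also have "\<dots> = (\<integral>\<^sup>+w. ennreal (Vf (diana n gf \<alpha> xm \<beta> \<gamma> C x0 h0 w k)) \<partial>PiM UNIV N)"
  proof (rule nn_integral_cong)
    fix w :: "nat \<times> nat \<Rightarrow> 'b"
    have "\<forall>p\<in>{..<k} \<times> {..<n}. restrict w J p = w p" using J by auto
    from loc[OF this] show "ennreal (Vf (diana n gf \<alpha> xm \<beta> \<gamma> C x0 h0 (restrict w J) k)) = ennreal (Vf (diana n gf \<alpha> xm \<beta> \<gamma> C x0 h0 w k))"
      using Vf_cong by metis
  qed
  finally show ?thesis by simp
qed

lemma mstep: "(\<integral>\<^sup>+w. ennreal (Vf (diana n gf \<alpha> xm \<beta> \<gamma> C x0 h0 w (Suc k))) \<partial>PiM UNIV N)
   \<le> ennreal rho * (\<integral>\<^sup>+w. ennreal (Vf (diana n gf \<alpha> xm \<beta> \<gamma> C x0 h0 w k)) \<partial>PiM UNIV N)"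
proof -
  interpret P: product_prob_space N UNIV by (rule PP)
  define I1 where "I1 = {..<k} \<times> {..<n}"
  define R where "R = {k} \<times> {..<n}"
  have fin: "finite I1" "finite R" unfolding I1_def R_def by auto
  have disj: "I1 \<inter> R = {}" unfolding I1_def R_def by auto
  have un: "I1 \<union> R = {..<Suc k} \<times> {..<n}" unfolding I1_def R_def by (auto simp: less_Suc_eq)
  have fm: "(\<lambda>w. ennreal (Vf (diana n gf \<alpha> xm \<beta> \<gamma> C x0 h0 w (Suc k)))) \<in> borel_measurable (PiM (I1 \<union> R) N)"
    by (rule measurable_compose[OF Vm measurable_ennreal]) (simp add: un)
  have "(\<integral>\<^sup>+w. ennreal (Vf (diana n gf \<alpha> xm \<beta> \<gamma> C x0 h0 w (Suc k))) \<partial>PiM UNIV N)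
      = (\<integral>\<^sup>+y. ennreal (Vf (diana n gf \<alpha> xm \<beta> \<gamma> C x0 h0 y (Suc k))) \<partial>PiM (I1 \<union> R) N)"
    by (rule E_restrict) (use fin un in auto)
  also have "\<dots> = (\<integral>\<^sup>+x. (\<integral>\<^sup>+y. ennreal (Vf (diana n gf \<alpha> xm \<beta> \<gamma> C x0 h0 (merge I1 R (x, y)) (Suc k))) \<partial>PiM R N) \<partial>PiM I1 N)"
    by (rule P.product_nn_integral_fold[OF disj fin fm])
  also have "\<dots> \<le> (\<integral>\<^sup>+x. ennreal (rho * Vf (diana n gf \<alpha> xm \<beta> \<gamma> C x0 h0 x k)) \<partial>PiM I1 N)"
  proof (rule nn_integral_mono)
    fix x :: "nat \<times> nat \<Rightarrow> 'b"
    have "(\<integral>\<^sup>+y. ennreal (Vf (diana n gf \<alpha> xm \<beta> \<gamma> C x0 h0 (merge I1 R (x, y)) (Suc k))) \<partial>PiM R N)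
        = (\<integral>\<^sup>+y. ennreal (Vf (stepf k (diana n gf \<alpha> xm \<beta> \<gamma> C x0 h0 x k) (\<lambda>i. y (k, i)))) \<partial>PiM R N)"
    proof (rule nn_integral_cong)
      fix y :: "nat \<times> nat \<Rightarrow> 'b"
      define m where "m = merge I1 R (x, y)"
      have "\<forall>p\<in>{..<k} \<times> {..<n}. m p = x p" unfolding m_def I1_def R_def by (auto simp: merge_def)
      from loc[OF this] have l: "fst (diana n gf \<alpha> xm \<beta> \<gamma> C x0 h0 m k) = fst (diana n gf \<alpha> xm \<beta> \<gamma> C x0 h0 x k)"
        "\<forall>i<n. snd (diana n gf \<alpha> xm \<beta> \<gamma> C x0 h0 m k) i = snd (diana n gf \<alpha> xm \<beta> \<gamma> C x0 h0 x k) i" by auto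
      have b: "\<forall>i<n. m (k, i) = y (k, i)" unfolding m_def I1_def R_def by (auto simp: merge_def)
      have "fst (stepf k (diana n gf \<alpha> xm \<beta> \<gamma> C x0 h0 m k) (\<lambda>i. m (k, i))) = fst (stepf k (diana n gf \<alpha> xm \<beta> \<gamma> C x0 h0 x k) (\<lambda>i. y (k, i)))
        \<and> (\<forall>i<n. snd (stepf k (diana n gf \<alpha> xm \<beta> \<gamma> C x0 h0 m k) (\<lambda>i. m (k, i))) i = snd (stepf k (diana n gf \<alpha> xm \<beta> \<gamma> C x0 h0 x k) (\<lambda>i. y (k, i))) i)"
        by (rule stepf_cong) (use l b in auto)
      then show "ennreal (Vf (diana n gf \<alpha> xm \<beta> \<gamma> C x0 h0 (merge I1 R (x, y)) (Suc k)))
          = ennreal (Vf (stepf k (diana n gf \<alpha> xm \<beta> \<gamma> C x0 h0 x k) (\<lambda>i. y (k, i))))"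
        unfolding m_def[symmetric] diana_Suc' using Vf_cong by metis
    qed
    also have "\<dots> \<le> ennreal (rho * Vf (diana n gf \<alpha> xm \<beta> \<gamma> C x0 h0 x k))"
      unfolding R_def by (rule row)
    finally show "(\<integral>\<^sup>+y. ennreal (Vf (diana n gf \<alpha> xm \<beta> \<gamma> C x0 h0 (merge I1 R (x, y)) (Suc k))) \<partial>PiM R N)
        \<le> ennreal (rho * Vf (diana n gf \<alpha> xm \<beta> \<gamma> C x0 h0 x k))" .
  qed
  also have "\<dots> = (\<integral>\<^sup>+x. ennreal rho * ennreal (Vf (diana n gf \<alpha> xm \<beta> \<gamma> C x0 h0 x k)) \<partial>PiM I1 N)"
    using rho0 by (simp add: ennreal_mult')
  also have "\<dots> = ennreal rho * (\<integral>\<^sup>+x. ennreal (Vf (diana n gf \<alpha> xm \<beta> \<gamma> C x0 h0 x k)) \<partial>PiM I1 N)"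
    by (rule nn_integral_cmult[OF measurable_compose[OF Vm measurable_ennreal]]) (simp add: I1_def)
  also have "(\<integral>\<^sup>+x. ennreal (Vf (diana n gf \<alpha> xm \<beta> \<gamma> C x0 h0 x k)) \<partial>PiM I1 N)
      = (\<integral>\<^sup>+w. ennreal (Vf (diana n gf \<alpha> xm \<beta> \<gamma> C x0 h0 w k)) \<partial>PiM UNIV N)"
    by (rule E_restrict[symmetric]) (use fin in \<open>auto simp: I1_def\<close>)
  finally show ?thesis .
qed

lemma main_ctx: "\<forall>k. (\<integral>\<^sup>+ w. ennreal
             (let (x, h) = diana n gf \<alpha> xm \<beta> \<gamma> C x0 h0 w k in
                (norm (x - xstar))\<^sup>2 + 4 / (real n * Min (\<beta> ` {..<n})) * \<gamma>\<^sup>2 *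
                  ((1 / real n) * (\<Sum>i<n. \<omega> i * (norm (h i - \<alpha> i *\<^sub>R gf i (\<alpha> i *\<^sub>R xstar + (1 - \<alpha> i) *\<^sub>R xm i)))\<^sup>2)))
           \<partial>(PiM UNIV N))
         \<le> ennreal (max ((1 - \<gamma> * ((1 / real n) * (\<Sum>i<n. (\<alpha> i)\<^sup>2 * \<mu> i))) ^ k)
                        ((1 - Min (\<beta> ` {..<n}) / 2) ^ k)
                   * ((norm (x0 - xstar))\<^sup>2 + 4 / (real n * Min (\<beta> ` {..<n})) * \<gamma>\<^sup>2 *
                      ((1 / real n) * (\<Sum>i<n. \<omega> i * (norm (h0 i - \<alpha> i *\<^sub>R gf i (\<alpha> i *\<^sub>R xstar + (1 - \<alpha> i) *\<^sub>R xm i)))\<^sup>2))))"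
proof
  fix k
  have Vlet: "(let (x, h) = s in
                (norm (x - xstar))\<^sup>2 + 4 / (real n * Min (\<beta> ` {..<n})) * \<gamma>\<^sup>2 *
                  ((1 / real n) * (\<Sum>i<n. \<omega> i * (norm (h i - \<alpha> i *\<^sub>R gf i (\<alpha> i *\<^sub>R xstar + (1 - \<alpha> i) *\<^sub>R xm i)))\<^sup>2))) = Vf s" for s
    by (simp add: Vf_def Kc_def gs_def split_def Let_def)
  have V0: "(norm (x0 - xstar))\<^sup>2 + 4 / (real n * Min (\<beta> ` {..<n})) * \<gamma>\<^sup>2 *
                      ((1 / real n) * (\<Sum>i<n. \<omega> i * (norm (h0 i - \<alpha> i *\<^sub>R gf i (\<alpha> i *\<^sub>R xstar + (1 - \<alpha> i) *\<^sub>R xm i)))\<^sup>2))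
       = Vf (x0, h0)"
    by (simp add: Vf_def Kc_def gs_def)
  interpret P: product_prob_space N UNIV by (rule PP)
  have E: "(\<integral>\<^sup>+w. ennreal (Vf (diana n gf \<alpha> xm \<beta> \<gamma> C x0 h0 w k)) \<partial>PiM UNIV N) \<le> ennreal (rho ^ k * Vf (x0, h0))"
  proof (induction k)
    case 0
    show ?case by (simp add: P.emeasure_space_1)
  next
    case (Suc k)
    have "(\<integral>\<^sup>+w. ennreal (Vf (diana n gf \<alpha> xm \<beta> \<gamma> C x0 h0 w (Suc k))) \<partial>PiM UNIV N)
        \<le> ennreal rho * (\<integral>\<^sup>+w. ennreal (Vf (diana n gf \<alpha> xm \<beta> \<gamma> C x0 h0 w k)) \<partial>PiM UNIV N)"
      by (rule mstep)
    also have "\<dots> \<le> ennreal rho * ennreal (rho ^ k * Vf (x0, h0))"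
      by (rule mult_left_mono[OF Suc.IH]) simp
    also have "\<dots> = ennreal (rho ^ Suc k * Vf (x0, h0))"
      using rho0 by (simp add: ennreal_mult'[symmetric] mult.assoc)
    finally show ?case .
  qed
  have "rho ^ k \<le> max ((1 - \<gamma> * ((1 / real n) * (\<Sum>i<n. (\<alpha> i)\<^sup>2 * \<mu> i))) ^ k) ((1 - Min (\<beta> ` {..<n}) / 2) ^ k)"
    unfolding rho_def Mu_def by (cases "1 - \<gamma> * ((1 / real n) * (\<Sum>i<n. (\<alpha> i)\<^sup>2 * \<mu> i)) \<le> 1 - Min (\<beta> ` {..<n}) / 2")
      (auto simp: max_def)
  then have "rho ^ k * Vf (x0, h0) \<le> max ((1 - \<gamma> * ((1 / real n) * (\<Sum>i<n. (\<alpha> i)\<^sup>2 * \<mu> i))) ^ k) ((1 - Min (\<beta> ` {..<n}) / 2) ^ k) * Vf (x0, h0)"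
    using Vf0 by (rule mult_right_mono)
  then have "ennreal (rho ^ k * Vf (x0, h0)) \<le> ennreal (max ((1 - \<gamma> * ((1 / real n) * (\<Sum>i<n. (\<alpha> i)\<^sup>2 * \<mu> i))) ^ k) ((1 - Min (\<beta> ` {..<n}) / 2) ^ k) * Vf (x0, h0))"
    by (rule ennreal_leI)
  with E show "(\<integral>\<^sup>+ w. ennreal
             (let (x, h) = diana n gf \<alpha> xm \<beta> \<gamma> C x0 h0 w k in
                (norm (x - xstar))\<^sup>2 + 4 / (real n * Min (\<beta> ` {..<n})) * \<gamma>\<^sup>2 *
                  ((1 / real n) * (\<Sum>i<n. \<omega> i * (norm (h i - \<alpha> i *\<^sub>R gf i (\<alpha> i *\<^sub>R xstar + (1 - \<alpha> i) *\<^sub>R xm i)))\<^sup>2)))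
           \<partial>(PiM UNIV N))
         \<le> ennreal (max ((1 - \<gamma> * ((1 / real n) * (\<Sum>i<n. (\<alpha> i)\<^sup>2 * \<mu> i))) ^ k)
                        ((1 - Min (\<beta> ` {..<n}) / 2) ^ k)
                   * ((norm (x0 - xstar))\<^sup>2 + 4 / (real n * Min (\<beta> ` {..<n})) * \<gamma>\<^sup>2 *
                      ((1 / real n) * (\<Sum>i<n. \<omega> i * (norm (h0 i - \<alpha> i *\<^sub>R gf i (\<alpha> i *\<^sub>R xstar + (1 - \<alpha> i) *\<^sub>R xm i)))\<^sup>2))))"
    unfolding Vlet V0 by (rule order_trans)
qed

end
end
end

theorem theorem4:
  fixes n :: nat
    and f :: "nat \<Rightarrow> 'a::euclidean_space \<Rightarrow> real" and gf :: "nat \<Rightarrow> 'a \<Rightarrow> 'a"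
    and L \<mu> \<alpha> \<omega> \<beta> :: "nat \<Rightarrow> real" and \<gamma> :: real
    and xm :: "nat \<Rightarrow> 'a" and xstar x0 :: 'a and h0 :: "nat \<Rightarrow> 'a"
    and N :: "nat \<times> nat \<Rightarrow> 'b measure" and C :: "nat \<Rightarrow> nat \<Rightarrow> 'b \<Rightarrow> 'a \<Rightarrow> 'a"
  assumes n_pos: "n \<ge> 1"
    and smooth: "\<forall>i<n. L_smooth (f i) (gf i) (L i)"
    and sconv: "\<forall>i<n. 0 < \<mu> i \<and> strongly_convex (f i) (gf i) (\<mu> i)"
    and xm_min: "\<forall>i<n. \<forall>y. f i (xm i) \<le> f i y"
    and alpha: "\<forall>i<n. 0 < \<alpha> i \<and> \<alpha> i < 1"
    and xstar_min: "\<forall>y. (1 / real n) * (\<Sum>i<n. f i (\<alpha> i *\<^sub>R xstar + (1 - \<alpha> i) *\<^sub>R xm i))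
                      \<le> (1 / real n) * (\<Sum>i<n. f i (\<alpha> i *\<^sub>R y + (1 - \<alpha> i) *\<^sub>R xm i))"
    and omega: "\<forall>i<n. 0 \<le> \<omega> i"
    and beta: "\<forall>i<n. 0 < \<beta> i \<and> \<beta> i \<le> 1 / (\<omega> i + 1)"
    and N_prob: "\<forall>k i. prob_space (N (k, i))"
    and C_meas: "\<forall>k i. (\<lambda>(b, x). C k i b x) \<in> borel_measurable (N (k, i) \<Otimes>\<^sub>M borel)"
    and C_class: "\<forall>k. \<forall>i<n. unbiased_compressor (N (k, i)) (C k i) (\<omega> i)"
    and gamma_pos: "0 < \<gamma>"
    and gamma_le: "\<gamma> \<le> inverse ((1 / real n) * (\<Sum>i<n. (\<alpha> i)\<^sup>2 * L i)
                     + 2 * Max ((\<lambda>i. L i * (\<alpha> i)\<^sup>2 * \<omega> i) ` {..<n}) / real n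
                     + 4 * Max ((\<lambda>i. \<beta> i * \<omega> i * L i * (\<alpha> i)\<^sup>2) ` {..<n})
                         / (real n * Min (\<beta> ` {..<n})))"
  shows "\<forall>k. (\<integral>\<^sup>+ w. ennreal
             (let (x, h) = diana n gf \<alpha> xm \<beta> \<gamma> C x0 h0 w k in
                (norm (x - xstar))\<^sup>2 + 4 / (real n * Min (\<beta> ` {..<n})) * \<gamma>\<^sup>2 *
                  ((1 / real n) * (\<Sum>i<n. \<omega> i * (norm (h i - \<alpha> i *\<^sub>R gf i (\<alpha> i *\<^sub>R xstar + (1 - \<alpha> i) *\<^sub>R xm i)))\<^sup>2)))
           \<partial>(PiM UNIV N))
         \<le> ennreal (max ((1 - \<gamma> * ((1 / real n) * (\<Sum>i<n. (\<alpha> i)\<^sup>2 * \<mu> i))) ^ k)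
                        ((1 - Min (\<beta> ` {..<n}) / 2) ^ k)
                   * ((norm (x0 - xstar))\<^sup>2 + 4 / (real n * Min (\<beta> ` {..<n})) * \<gamma>\<^sup>2 *
                      ((1 / real n) * (\<Sum>i<n. \<omega> i * (norm (h0 i - \<alpha> i *\<^sub>R gf i (\<alpha> i *\<^sub>R xstar + (1 - \<alpha> i) *\<^sub>R xm i)))\<^sup>2))))"
  by (rule main_ctx[OF n_pos smooth sconv alpha xstar_min omega beta gamma_pos gamma_le N_prob C_meas C_class])

end
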